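(* Let $\{X_n, n\geqslant 1\}$ be a sequence of pairwise positively quadrant dependent (pairwise PQD) random variables stochastically dominated by a random variable $X$ with $\mathbb{E}|X|<\infty$. Let $\{a_n\}$ be a sequence of real constants such that $\sup_{n\geqslant 1} n^{-1}\sum_{k=1}^n a_k^2<\infty$ and \[ \sum_{1\leqslant k<j<\infty} |a_k a_j| \int_j^\infty t^{-3}\, G_{X_k,X_j}(t)\,\mathrm{d}t<\infty . \] Then $\frac{1}{n}\sum_{k=1}^n a_k(X_k-\mathbb{E}X_k)\to 0$ almost surely.
   Context: A sequence $\{X_n, n\geqslant1\}$ of random variables is pairwise PQD if $\mathbb{P}\{X_k\leqslant x_k, X_j\leqslant x_j\}-\mathbb{P}\{X_k\leqslant x_k\}\mathbb{P}\{X_j\leqslant x_j\}\geqslant 0$ for all reals $x_k,x_j$ and all positive integers $k\neq j$. A sequence $\{X_n\}$ is stochastically dominated by a random variable $X$ if there is a constant $C>0$ with $\sup_{n\geqslant1}\mathbb{P}\{|X_n|>t\}\leqslant C\,\mathbb{P}\{|X|>t\}$ for all $t>0$. For random variables $X,Y$ and $t>0$, let $g_t(s)=\max(\min(s,t),-t)$, $\Delta_{X,Y}(x,y)=\mathbb{P}\{X\leqslant x,Y\leqslant y\}-\mathbb{P}\{X\leqslant x\}\mathbb{P}\{Y\leqslant y\}$, and $G_{X,Y}(t)=\mathrm{Cov}(g_t(X),g_t(Y))=\int_{-t}^t\int_{-t}^t \Delta_{X,Y}(x,y)\,\mathrm{d}x\,\mathrm{d}y$. *)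

theory Defs
  imports "HOL-Probability.Probability"
begin

definition trunc_at :: "real \<Rightarrow> real \<Rightarrow> real" where
  "trunc_at t s = max (min s t) (- t)"

definition pairwise_PQD :: "'a measure \<Rightarrow> (nat \<Rightarrow> 'a \<Rightarrow> real) \<Rightarrow> bool" where
  "pairwise_PQD M X \<longleftrightarrow>
     (\<forall>k j (x::real) (y::real). 1 \<le> k \<longrightarrow> 1 \<le> j \<longrightarrow> k \<noteq> j \<longrightarrow>
        measure M {\<omega>\<in>space M. X k \<omega> \<le> x \<and> X j \<omega> \<le> y}
          - measure M {\<omega>\<in>space M. X k \<omega> \<le> x} * measure M {\<omega>\<in>space M. X j \<omega> \<le> y} \<ge> 0)"

definition stoch_dominated :: "'a measure \<Rightarrow> (nat \<Rightarrow> 'a \<Rightarrow> real) \<Rightarrow> ('a \<Rightarrow> real) \<Rightarrow> bool" where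
  "stoch_dominated M X Y \<longleftrightarrow>
     (\<exists>C>0. \<forall>n\<ge>1. \<forall>t>0.
        measure M {\<omega>\<in>space M. \<bar>X n \<omega>\<bar> > t} \<le> C * measure M {\<omega>\<in>space M. \<bar>Y \<omega>\<bar> > t})"

definition Gcov :: "'a measure \<Rightarrow> ('a \<Rightarrow> real) \<Rightarrow> ('a \<Rightarrow> real) \<Rightarrow> real \<Rightarrow> real" where
  "Gcov M X Y t =
     (\<integral>\<omega>. trunc_at t (X \<omega>) * trunc_at t (Y \<omega>) \<partial>M)
     - (\<integral>\<omega>. trunc_at t (X \<omega>) \<partial>M) * (\<integral>\<omega>. trunc_at t (Y \<omega>) \<partial>M)"

end

theory Submission
  imports Defs
begin

definition clip :: "real \<Rightarrow> real \<Rightarrow> real \<Rightarrow> real" where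
  "clip a b x = max (min x b) a"

lemma clip_measurable[measurable]: "clip a b \<in> borel_measurable borel"
  unfolding clip_def by measurable

lemma clip_bound: "a \<le> b \<Longrightarrow> \<bar>clip a b x\<bar> \<le> max \<bar>a\<bar> \<bar>b\<bar>"
  unfolding clip_def by auto

lemma inner_clip_integral:
  assumes "a \<le> b"
  shows "(\<integral>u. indicator {a..b} u * (if u < x then v else 0) \<partial>lborel) = v * (clip a b x - a)"
proof (cases "x \<le> a")
  case True
  then have "(\<lambda>u. indicator {a..b} u * (if u < x then v else 0)) = (\<lambda>u. 0::real)"
    by (auto simp: fun_eq_iff indicator_def)
  then show ?thesis using True assms by (simp add: clip_def)
next
  case False
  show ?thesis
  proof (cases "x \<le> b")
    case True
    then have "(\<lambda>u. indicator {a..b} u * (if u < x then v else 0)) = (\<lambda>u. v * indicator {a..<x} u)"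
      using False by (auto simp: fun_eq_iff indicator_def)
    then show ?thesis using True False assms by (simp add: clip_def)
  next
    case c: False
    then have "(\<lambda>u. indicator {a..b} u * (if u < x then v else 0)) = (\<lambda>u. v * indicator {a..b} u)"
      by (auto simp: fun_eq_iff indicator_def)
    then show ?thesis using c False assms by (simp add: clip_def)
  qed
qed

lemma (in prob_space) clip_fubini:
  fixes X V :: "'a \<Rightarrow> real"
  assumes [measurable]: "X \<in> borel_measurable M" "V \<in> borel_measurable M"
    and bnd: "\<And>\<omega>. \<omega> \<in> space M \<Longrightarrow> \<bar>V \<omega>\<bar> \<le> K" and ab: "a \<le> b"
  shows "integrable lborel (\<lambda>u. indicator {a..b} u * expectation (\<lambda>\<omega>. if u < X \<omega> then V \<omega> else 0))"
    and "expectation (\<lambda>\<omega>. clip a b (X \<omega>) * V \<omega>) = a * expectation V +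
          (\<integral>u. indicator {a..b} u * expectation (\<lambda>\<omega>. if u < X \<omega> then V \<omega> else 0) \<partial>lborel)"
proof -
  interpret P: pair_sigma_finite M lborel
    by (simp add: pair_sigma_finite_def lborel.sigma_finite_measure_axioms sigma_finite_measure_axioms)
  define f where "f = (\<lambda>\<omega> u. indicator {a..b} u * (if u < X \<omega> then V \<omega> else (0::real)))"
  have fm[measurable]: "case_prod f \<in> borel_measurable (M \<Otimes>\<^sub>M lborel)"
    unfolding f_def by measurable
  have intA: "integrable (M \<Otimes>\<^sub>M lborel) (indicator (space M \<times> {a..b}) :: _ \<Rightarrow> real)"
  proof (rule integrable_real_indicator)
    show "space M \<times> {a..b} \<in> sets (M \<Otimes>\<^sub>M lborel)" by measurable
    have "emeasure (M \<Otimes>\<^sub>M lborel) (space M \<times> {a..b}) = emeasure M (space M) * emeasure lborel {a..b}"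
      by (rule lborel.emeasure_pair_measure_Times) auto
    then show "emeasure (M \<Otimes>\<^sub>M lborel) (space M \<times> {a..b}) < \<infinity>"
      using ab by (simp add: emeasure_space_1 ennreal_mult_less_top)
  qed
  have intK: "integrable (M \<Otimes>\<^sub>M lborel) (\<lambda>x. K * indicator (space M \<times> {a..b}) x)"
    using intA by simp
  have bndf: "AE x in M \<Otimes>\<^sub>M lborel. norm (case_prod f x) \<le> norm (K * indicator (space M \<times> {a..b}) x)"
  proof (rule AE_I2)
    fix x :: "'a \<times> real" assume "x \<in> space (M \<Otimes>\<^sub>M lborel)"
    then obtain \<omega> u where x: "x = (\<omega>, u)" "\<omega> \<in> space M" by (auto simp: space_pair_measure)
    have "0 \<le> K" using bnd[OF x(2)] by linarith
    then show "norm (case_prod f x) \<le> norm (K * indicator (space M \<times> {a..b}) x)"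
      using x bnd[OF x(2)] by (auto simp: f_def indicator_def)
  qed
  have intf: "integrable (M \<Otimes>\<^sub>M lborel) (case_prod f)"
    by (rule Bochner_Integration.integrable_bound[OF intK fm bndf])
  have inner: "(\<integral>u. f \<omega> u \<partial>lborel) = V \<omega> * (clip a b (X \<omega>) - a)" for \<omega>
    unfolding f_def by (rule inner_clip_integral[OF ab])
  have inner2: "(\<integral>\<omega>. f \<omega> u \<partial>M) = indicator {a..b} u * expectation (\<lambda>\<omega>. if u < X \<omega> then V \<omega> else 0)" for u
    unfolding f_def by simp
  have "integrable lborel (\<lambda>u. \<integral>\<omega>. f \<omega> u \<partial>M)"
    by (rule P.integrable_snd[OF intf])
  then show "integrable lborel (\<lambda>u. indicator {a..b} u * expectation (\<lambda>\<omega>. if u < X \<omega> then V \<omega> else 0))"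
    unfolding inner2 .
  have intV: "integrable M V"
    by (rule integrable_const_bound[where B=K]) (use bnd in auto)
  have intCV: "integrable M (\<lambda>\<omega>. clip a b (X \<omega>) * V \<omega>)"
    by (rule integrable_const_bound[where B="max \<bar>a\<bar> \<bar>b\<bar> * K"])
       (use bnd clip_bound[OF ab] in \<open>auto simp: abs_mult intro!: mult_mono\<close>)
  have "(\<integral>u. (\<integral>\<omega>. f \<omega> u \<partial>M) \<partial>lborel) = (\<integral>\<omega>. (\<integral>u. f \<omega> u \<partial>lborel) \<partial>M)"
    by (rule P.Fubini_integral[OF intf])
  also have "\<dots> = expectation (\<lambda>\<omega>. clip a b (X \<omega>) * V \<omega> - a * V \<omega>)"
    unfolding inner by (simp add: algebra_simps)
  also have "\<dots> = expectation (\<lambda>\<omega>. clip a b (X \<omega>) * V \<omega>) - a * expectation V"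
    using intV intCV by simp
  finally show "expectation (\<lambda>\<omega>. clip a b (X \<omega>) * V \<omega>) = a * expectation V +
          (\<integral>u. indicator {a..b} u * expectation (\<lambda>\<omega>. if u < X \<omega> then V \<omega> else 0) \<partial>lborel)"
    unfolding inner2 by simp
qed

lemma (in prob_space) expect_ind:
  assumes "{\<omega>\<in>space M. P \<omega>} \<in> events"
  shows "expectation (\<lambda>\<omega>. if P \<omega> then (1::real) else 0) = prob {\<omega>\<in>space M. P \<omega>}"
proof -
  have "expectation (\<lambda>\<omega>. if P \<omega> then (1::real) else 0) = expectation (indicator {\<omega>\<in>space M. P \<omega>} :: 'a \<Rightarrow> real)"
    by (rule Bochner_Integration.integral_cong) (auto simp: indicator_def)
  then show ?thesis using assms by (simp add: Int_absorb2)
qed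

lemma (in prob_space) pqd_upper:
  fixes X1 X2 :: "'a \<Rightarrow> real"
  assumes [measurable]: "X1 \<in> borel_measurable M" "X2 \<in> borel_measurable M"
    and pq: "\<And>x y. prob {\<omega>\<in>space M. X1 \<omega> \<le> x \<and> X2 \<omega> \<le> y} - prob {\<omega>\<in>space M. X1 \<omega> \<le> x} * prob {\<omega>\<in>space M. X2 \<omega> \<le> y} \<ge> 0"
  shows "prob {\<omega>\<in>space M. u < X1 \<omega> \<and> v < X2 \<omega>} \<ge> prob {\<omega>\<in>space M. u < X1 \<omega>} * prob {\<omega>\<in>space M. v < X2 \<omega>}"
proof -
  define A where "A = {\<omega>\<in>space M. X1 \<omega> \<le> u}"
  define B where "B = {\<omega>\<in>space M. X2 \<omega> \<le> v}"
  have [measurable]: "A \<in> events" "B \<in> events" unfolding A_def B_def by measurable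
  have e1: "{\<omega>\<in>space M. u < X1 \<omega> \<and> v < X2 \<omega>} = space M - (A \<union> B)"
    unfolding A_def B_def by auto
  have e2: "{\<omega>\<in>space M. u < X1 \<omega>} = space M - A" unfolding A_def by auto
  have e3: "{\<omega>\<in>space M. v < X2 \<omega>} = space M - B" unfolding B_def by auto
  have e4: "{\<omega>\<in>space M. X1 \<omega> \<le> u \<and> X2 \<omega> \<le> v} = A \<inter> B" unfolding A_def B_def by auto
  have un: "prob (A \<union> B) = prob A + prob B - prob (A \<inter> B)"
    by (rule measure_Un3) (auto simp: fmeasurable_def less_top[symmetric])
  have "prob (A \<inter> B) - prob A * prob B \<ge> 0"
    using pq[of u v] unfolding e4 A_def B_def by simp
  then show ?thesis
    unfolding e1 e2 e3 by (simp add: prob_compl un algebra_simps)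
qed

lemma (in prob_space) cov_from_fubini:
  fixes g V :: "'a \<Rightarrow> real" and h1 h0 :: "real \<Rightarrow> real"
  assumes "integrable lborel h1" "integrable lborel h0"
    and "expectation (\<lambda>\<omega>. g \<omega> * V \<omega>) = a * expectation V + integral\<^sup>L lborel h1"
    and "expectation (\<lambda>\<omega>. g \<omega> * 1) = a * expectation (\<lambda>\<omega>. 1) + integral\<^sup>L lborel h0"
    and "\<And>u. h1 u - expectation V * h0 u \<ge> 0"
  shows "expectation (\<lambda>\<omega>. g \<omega> * V \<omega>) \<ge> expectation g * expectation V"
proof -
  have "integral\<^sup>L lborel (\<lambda>u. h1 u - expectation V * h0 u) \<ge> 0"
    by (rule integral_nonneg_AE) (use assms(5) in auto)
  moreover have "integral\<^sup>L lborel (\<lambda>u. h1 u - expectation V * h0 u) = integral\<^sup>L lborel h1 - expectation V * integral\<^sup>L lborel h0"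
    using assms(1,2) by simp
  ultimately show ?thesis using assms(3,4) by (simp add: algebra_simps prob_space)
qed

lemma (in prob_space) pqd_clip_cov:
  fixes X1 X2 :: "'a \<Rightarrow> real"
  assumes [measurable]: "X1 \<in> borel_measurable M" "X2 \<in> borel_measurable M"
    and pq: "\<And>x y. prob {\<omega>\<in>space M. X1 \<omega> \<le> x \<and> X2 \<omega> \<le> y} - prob {\<omega>\<in>space M. X1 \<omega> \<le> x} * prob {\<omega>\<in>space M. X2 \<omega> \<le> y} \<ge> 0"
    and ab: "a \<le> b" and cd: "c \<le> d"
  shows "expectation (\<lambda>\<omega>. clip a b (X1 \<omega>) * clip c d (X2 \<omega>)) \<ge>
          expectation (\<lambda>\<omega>. clip a b (X1 \<omega>)) * expectation (\<lambda>\<omega>. clip c d (X2 \<omega>))"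
proof -
  have step2: "expectation (\<lambda>\<omega>. clip c d (X2 \<omega>) * (if u < X1 \<omega> then (1::real) else 0)) \<ge>
      expectation (\<lambda>\<omega>. clip c d (X2 \<omega>)) * expectation (\<lambda>\<omega>. if u < X1 \<omega> then (1::real) else 0)" for u
  proof (rule cov_from_fubini)
    let ?V = "\<lambda>\<omega>. if u < X1 \<omega> then 1 else (0::real)"
    show "integrable lborel (\<lambda>v. indicator {c..d} v * expectation (\<lambda>\<omega>. if v < X2 \<omega> then ?V \<omega> else 0))"
      by (rule clip_fubini(1)[where K=1]) (use cd in auto)
    show "integrable lborel (\<lambda>v. indicator {c..d} v * expectation (\<lambda>\<omega>. if v < X2 \<omega> then (1::real) else 0))"
      by (rule clip_fubini(1)[where K=1 and V="\<lambda>_. 1", simplified]) (use cd in auto)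
    show "expectation (\<lambda>\<omega>. clip c d (X2 \<omega>) * ?V \<omega>) = c * expectation ?V +
       (\<integral>v. indicator {c..d} v * expectation (\<lambda>\<omega>. if v < X2 \<omega> then ?V \<omega> else 0) \<partial>lborel)"
      by (rule clip_fubini(2)[where K=1]) (use cd in auto)
    show "expectation (\<lambda>\<omega>. clip c d (X2 \<omega>) * 1) = c * expectation (\<lambda>\<omega>. 1) +
       (\<integral>v. indicator {c..d} v * expectation (\<lambda>\<omega>. if v < X2 \<omega> then (1::real) else 0) \<partial>lborel)"
      by (rule clip_fubini(2)[where K=1 and V="\<lambda>_. 1"]) (use cd in auto)
    fix v
    have "expectation (\<lambda>\<omega>. if v < X2 \<omega> then ?V \<omega> else 0) = prob {\<omega>\<in>space M. u < X1 \<omega> \<and> v < X2 \<omega>}"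
      by (subst expect_ind[symmetric]) (auto intro!: Bochner_Integration.integral_cong)
    moreover have "expectation ?V = prob {\<omega>\<in>space M. u < X1 \<omega>}"
      by (rule expect_ind) simp
    moreover have "expectation (\<lambda>\<omega>. if v < X2 \<omega> then (1::real) else 0) = prob {\<omega>\<in>space M. v < X2 \<omega>}"
      by (rule expect_ind) simp
    moreover note pqd_upper[OF assms(1,2) pq, of u v]
    ultimately show "indicator {c..d} v * expectation (\<lambda>\<omega>. if v < X2 \<omega> then ?V \<omega> else 0) -
         expectation ?V * (indicator {c..d} v * expectation (\<lambda>\<omega>. if v < X2 \<omega> then (1::real) else 0)) \<ge> 0"
      by (auto simp: indicator_def)
  qed
  show ?thesis
  proof (rule cov_from_fubini)
    let ?V = "\<lambda>\<omega>. clip c d (X2 \<omega>)"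
    have bV: "\<bar>?V \<omega>\<bar> \<le> max \<bar>c\<bar> \<bar>d\<bar>" for \<omega> by (rule clip_bound[OF cd])
    show "integrable lborel (\<lambda>u. indicator {a..b} u * expectation (\<lambda>\<omega>. if u < X1 \<omega> then ?V \<omega> else 0))"
      by (rule clip_fubini(1)[where K="max \<bar>c\<bar> \<bar>d\<bar>"]) (use ab bV in auto)
    show "integrable lborel (\<lambda>u. indicator {a..b} u * expectation (\<lambda>\<omega>. if u < X1 \<omega> then (1::real) else 0))"
      by (rule clip_fubini(1)[where K=1 and V="\<lambda>_. 1", simplified]) (use ab in auto)
    show "expectation (\<lambda>\<omega>. clip a b (X1 \<omega>) * ?V \<omega>) = a * expectation ?V +
       (\<integral>u. indicator {a..b} u * expectation (\<lambda>\<omega>. if u < X1 \<omega> then ?V \<omega> else 0) \<partial>lborel)"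
      by (rule clip_fubini(2)[where K="max \<bar>c\<bar> \<bar>d\<bar>"]) (use ab bV in auto)
    show "expectation (\<lambda>\<omega>. clip a b (X1 \<omega>) * 1) = a * expectation (\<lambda>\<omega>. 1) +
       (\<integral>u. indicator {a..b} u * expectation (\<lambda>\<omega>. if u < X1 \<omega> then (1::real) else 0) \<partial>lborel)"
      by (rule clip_fubini(2)[where K=1 and V="\<lambda>_. 1"]) (use ab in auto)
    fix u
    have "expectation (\<lambda>\<omega>. if u < X1 \<omega> then ?V \<omega> else 0) = expectation (\<lambda>\<omega>. clip c d (X2 \<omega>) * (if u < X1 \<omega> then (1::real) else 0))"
      by (rule Bochner_Integration.integral_cong) auto
    with step2[of u] show "indicator {a..b} u * expectation (\<lambda>\<omega>. if u < X1 \<omega> then ?V \<omega> else 0) -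
         expectation ?V * (indicator {a..b} u * expectation (\<lambda>\<omega>. if u < X1 \<omega> then (1::real) else 0)) \<ge> 0"
      by (auto simp: indicator_def algebra_simps)
  qed
qed

lemma (in prob_space) layer_cake:
  fixes U :: "'a \<Rightarrow> real"
  assumes [measurable]: "U \<in> borel_measurable M" and nn: "\<And>\<omega>. \<omega> \<in> space M \<Longrightarrow> 0 \<le> U \<omega>"
  shows "(\<integral>\<^sup>+\<omega>. ennreal (U \<omega>) \<partial>M) = (\<integral>\<^sup>+s. indicator {0<..} s * emeasure M {\<omega>\<in>space M. s < U \<omega>} \<partial>lborel)"
proof -
  interpret P: pair_sigma_finite M lborel
    by (simp add: pair_sigma_finite_def lborel.sigma_finite_measure_axioms sigma_finite_measure_axioms)
  define g where "g = (\<lambda>\<omega> s. indicator {0<..<U \<omega>} s * indicator (space M) \<omega> :: ennreal)"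
  have gm: "case_prod g \<in> borel_measurable (M \<Otimes>\<^sub>M lborel)"
  proof -
    have "case_prod g = (\<lambda>x. indicator {x\<in>space (M \<Otimes>\<^sub>M lborel). 0 < snd x \<and> snd x < U (fst x)} x)"
      by (auto simp: g_def fun_eq_iff indicator_def space_pair_measure)
    also have "\<dots> \<in> borel_measurable (M \<Otimes>\<^sub>M lborel)"
      by (intro borel_measurable_indicator) measurable
    finally show ?thesis .
  qed
  have "(\<integral>\<^sup>+\<omega>. ennreal (U \<omega>) \<partial>M) = (\<integral>\<^sup>+\<omega>. (\<integral>\<^sup>+s. g \<omega> s \<partial>lborel) \<partial>M)"
    by (rule nn_integral_cong) (simp add: g_def nn)
  also have "\<dots> = (\<integral>\<^sup>+s. (\<integral>\<^sup>+\<omega>. g \<omega> s \<partial>M) \<partial>lborel)"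
    by (rule P.Fubini'[OF gm, symmetric])
  also have "\<dots> = (\<integral>\<^sup>+s. indicator {0<..} s * emeasure M {\<omega>\<in>space M. s < U \<omega>} \<partial>lborel)"
  proof (rule nn_integral_cong)
    fix s :: real
    have "(\<integral>\<^sup>+\<omega>. g \<omega> s \<partial>M) = (\<integral>\<^sup>+\<omega>. indicator {0<..} s * indicator {\<omega>\<in>space M. s < U \<omega>} \<omega> \<partial>M)"
      by (rule nn_integral_cong) (auto simp: g_def indicator_def)
    also have "\<dots> = indicator {0<..} s * emeasure M {\<omega>\<in>space M. s < U \<omega>}"
      by (subst nn_integral_cmult) auto
    finally show "(\<integral>\<^sup>+\<omega>. g \<omega> s \<partial>M) = indicator {0<..} s * emeasure M {\<omega>\<in>space M. s < U \<omega>}" .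
  qed
  finally show ?thesis .
qed

lemma (in prob_space) dom_nn:
  fixes U V :: "'a \<Rightarrow> real"
  assumes [measurable]: "U \<in> borel_measurable M" "V \<in> borel_measurable M"
    and "\<And>\<omega>. \<omega> \<in> space M \<Longrightarrow> 0 \<le> U \<omega>" "\<And>\<omega>. \<omega> \<in> space M \<Longrightarrow> 0 \<le> V \<omega>"
    and C: "0 \<le> C" and dom: "\<And>s. 0 < s \<Longrightarrow> prob {\<omega>\<in>space M. s < U \<omega>} \<le> C * prob {\<omega>\<in>space M. s < V \<omega>}"
  shows "(\<integral>\<^sup>+\<omega>. ennreal (U \<omega>) \<partial>M) \<le> ennreal C * (\<integral>\<^sup>+\<omega>. ennreal (V \<omega>) \<partial>M)"
proof -
  have "(\<integral>\<^sup>+\<omega>. ennreal (U \<omega>) \<partial>M) = (\<integral>\<^sup>+s. indicator {0<..} s * emeasure M {\<omega>\<in>space M. s < U \<omega>} \<partial>lborel)"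
    by (rule layer_cake) (use assms in auto)
  also have "\<dots> \<le> (\<integral>\<^sup>+s. ennreal C * (indicator {0<..} s * emeasure M {\<omega>\<in>space M. s < V \<omega>}) \<partial>lborel)"
  proof (rule nn_integral_mono)
    fix s :: real
    show "indicator {0<..} s * emeasure M {\<omega>\<in>space M. s < U \<omega>} \<le> ennreal C * (indicator {0<..} s * emeasure M {\<omega>\<in>space M. s < V \<omega>})"
    proof (cases "0 < s")
      case True
      then show ?thesis using dom[OF True] C
        by (simp add: emeasure_eq_measure ennreal_mult[symmetric])
    qed simp
  qed
  also have "\<dots> = ennreal C * (\<integral>\<^sup>+s. indicator {0<..} s * emeasure M {\<omega>\<in>space M. s < V \<omega>} \<partial>lborel)"
    by (rule nn_integral_cmult) measurable
  also have "(\<integral>\<^sup>+s. indicator {0<..} s * emeasure M {\<omega>\<in>space M. s < V \<omega>} \<partial>lborel) = (\<integral>\<^sup>+\<omega>. ennreal (V \<omega>) \<partial>M)"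
    by (rule layer_cake[symmetric]) (use assms in auto)
  finally show ?thesis .
qed

lemma (in prob_space) dom_int:
  fixes U V :: "'a \<Rightarrow> real"
  assumes [measurable]: "U \<in> borel_measurable M" "V \<in> borel_measurable M"
    and nU: "\<And>\<omega>. \<omega> \<in> space M \<Longrightarrow> 0 \<le> U \<omega>" and nV: "\<And>\<omega>. \<omega> \<in> space M \<Longrightarrow> 0 \<le> V \<omega>"
    and C: "0 \<le> C" and dom: "\<And>s. 0 < s \<Longrightarrow> prob {\<omega>\<in>space M. s < U \<omega>} \<le> C * prob {\<omega>\<in>space M. s < V \<omega>}"
    and iV: "integrable M V"
  shows "integrable M U" "expectation U \<le> C * expectation V"
proof -
  have le: "(\<integral>\<^sup>+\<omega>. ennreal (U \<omega>) \<partial>M) \<le> ennreal C * (\<integral>\<^sup>+\<omega>. ennreal (V \<omega>) \<partial>M)"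
    by (rule dom_nn) (use assms in auto)
  have eV: "(\<integral>\<^sup>+\<omega>. ennreal (V \<omega>) \<partial>M) = ennreal (expectation V)"
    by (rule nn_integral_eq_integral) (use iV nV in auto)
  have fin: "(\<integral>\<^sup>+\<omega>. ennreal (U \<omega>) \<partial>M) < \<infinity>"
  proof -
    have "ennreal C * ennreal (expectation V) < \<infinity>" by (simp add: ennreal_mult_less_top)
    then show ?thesis using le unfolding eV by (rule le_less_trans[rotated])
  qed
  show iU: "integrable M U"
    by (rule integrableI_nonneg) (use nU fin in auto)
  have eU: "(\<integral>\<^sup>+\<omega>. ennreal (U \<omega>) \<partial>M) = ennreal (expectation U)"
    by (rule nn_integral_eq_integral) (use iU nU in auto)
  have "0 \<le> expectation V" using nV by (simp add: integral_nonneg_AE)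
  then show "expectation U \<le> C * expectation V"
    using le unfolding eU eV using C by (simp add: ennreal_mult[symmetric])
qed

definition nseq :: "real \<Rightarrow> nat \<Rightarrow> nat" where
  "nseq \<alpha> m = nat \<lfloor>\<alpha> ^ m\<rfloor>"

lemma nseq_bounds:
  assumes "1 \<le> \<alpha>"
  shows "1 \<le> nseq \<alpha> m" "real (nseq \<alpha> m) \<le> \<alpha> ^ m" "\<alpha> ^ m \<le> 2 * real (nseq \<alpha> m)"
proof -
  have p: "1 \<le> \<alpha> ^ m" using assms by (simp add: one_le_power)
  then show "1 \<le> nseq \<alpha> m" unfolding nseq_def by linarith
  show "real (nseq \<alpha> m) \<le> \<alpha> ^ m" unfolding nseq_def using p by linarith
  have f1: "real_of_int \<lfloor>\<alpha> ^ m\<rfloor> > \<alpha> ^ m - 1" by linarith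
  have f2: "\<lfloor>\<alpha> ^ m\<rfloor> \<ge> 1" using p by linarith
  have f3: "real (nat \<lfloor>\<alpha> ^ m\<rfloor>) = real_of_int \<lfloor>\<alpha> ^ m\<rfloor>" using f2 by simp
  show "\<alpha> ^ m \<le> 2 * real (nseq \<alpha> m)" unfolding nseq_def f3 using f1 f2 by linarith
qed

lemma geom0:
  fixes q :: real
  assumes "0 \<le> q" "q < 1" "finite F"
  shows "(\<Sum>m\<in>F. q ^ m) \<le> 1 / (1 - q)"
proof -
  obtain N where F: "F \<subseteq> {..<N}"
    using assms(3) by (meson finite_nat_iff_bounded)
  have "(\<Sum>m\<in>F. q ^ m) \<le> (\<Sum>m<N. q ^ m)"
    by (rule sum_mono2) (use F assms in auto)
  also have "\<dots> = (1 - q ^ N) / (1 - q)"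
    using assms by (simp add: sum_gp_strict)
  also have "\<dots> \<le> 1 / (1 - q)"
    using assms by (simp add: divide_right_mono)
  finally show ?thesis .
qed

lemma geom1:
  fixes q z :: real
  assumes "0 \<le> q" "q < 1" "finite F" "0 \<le> z" "\<And>m. m \<in> F \<Longrightarrow> q ^ m \<le> z"
  shows "(\<Sum>m\<in>F. q ^ m) \<le> z / (1 - q)"
proof (cases "F = {}")
  case True then show ?thesis using assms by simp
next
  case False
  define m0 where "m0 = Min F"
  have m0: "m0 \<in> F" "\<And>m. m \<in> F \<Longrightarrow> m0 \<le> m"
    using False assms(3) unfolding m0_def by auto
  have "(\<Sum>m\<in>F. q ^ m) = (\<Sum>m\<in>F. q ^ m0 * q ^ (m - m0))"
    by (rule sum.cong) (auto simp: m0 power_add[symmetric])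
  also have "\<dots> = q ^ m0 * (\<Sum>m\<in>F. q ^ (m - m0))"
    by (simp add: sum_distrib_left)
  also have "(\<Sum>m\<in>F. q ^ (m - m0)) = (\<Sum>i\<in>(\<lambda>m. m - m0) ` F. q ^ i)"
  proof (rule sum.reindex[symmetric, unfolded comp_def])
    show "inj_on (\<lambda>m. m - m0) F" using m0(2) by (rule inj_on_diff_nat[rotated]) simp
  qed
  also have "\<dots> \<le> 1 / (1 - q)"
    by (rule geom0) (use assms in auto)
  finally have "(\<Sum>m\<in>F. q ^ m) \<le> q ^ m0 * (1 / (1 - q))"
    using assms by (simp add: mult_left_mono)
  also have "\<dots> \<le> z * (1 / (1 - q))"
    by (rule mult_right_mono) (use assms m0 in auto)
  finally show ?thesis by simp
qed

lemma geom2: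
  fixes \<alpha> z :: real
  assumes "1 < \<alpha>" "finite F" "\<And>m. m \<in> F \<Longrightarrow> \<alpha> ^ m \<le> z" "0 \<le> z"
  shows "(\<Sum>m\<in>F. \<alpha> ^ m) \<le> z * \<alpha> / (\<alpha> - 1)"
proof (cases "F = {}")
  case True
  then show ?thesis using assms by simp
next
  case False
  define M where "M = Max F"
  have M: "M \<in> F" "\<And>m. m \<in> F \<Longrightarrow> m \<le> M"
    using False assms(2) unfolding M_def by auto
  define q where "q = 1 / \<alpha>"
  have q: "0 \<le> q" "q < 1" using assms unfolding q_def by auto
  have "(\<Sum>m\<in>F. \<alpha> ^ m) = (\<Sum>m\<in>F. \<alpha> ^ M * q ^ (M - m))"
  proof (rule sum.cong)
    fix m assume "m \<in> F"
    then have "M = m + (M - m)" using M by simp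
    then have "\<alpha> ^ M = \<alpha> ^ m * \<alpha> ^ (M - m)" by (metis power_add)
    then show "\<alpha> ^ m = \<alpha> ^ M * q ^ (M - m)"
      using assms unfolding q_def by (simp add: power_one_over field_simps)
  qed simp
  also have "\<dots> = \<alpha> ^ M * (\<Sum>m\<in>F. q ^ (M - m))"
    by (simp add: sum_distrib_left)
  also have "(\<Sum>m\<in>F. q ^ (M - m)) = (\<Sum>i\<in>(\<lambda>m. M - m) ` F. q ^ i)"
  proof (rule sum.reindex[symmetric, unfolded comp_def])
    show "inj_on (\<lambda>m. M - m) F" using M(2) by (metis diff_diff_cancel inj_onI)
  qed
  also have "\<dots> \<le> 1 / (1 - q)"
    by (rule geom0) (use q assms in auto)
  also have "1 / (1 - q) = \<alpha> / (\<alpha> - 1)"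
    using assms unfolding q_def by (simp add: field_simps)
  finally have "(\<Sum>m\<in>F. \<alpha> ^ m) \<le> \<alpha> ^ M * (\<alpha> / (\<alpha> - 1))"
    using assms by (simp add: mult_left_mono)
  also have "\<dots> \<le> z * (\<alpha> / (\<alpha> - 1))"
    by (rule mult_right_mono) (use assms M in auto)
  finally show ?thesis by simp
qed

lemma pointwise1:
  fixes \<alpha> y :: real
  assumes a: "1 < \<alpha>" and y: "0 \<le> y" and F: "finite F"
  shows "(\<Sum>m\<in>F. (min y (real (nseq \<alpha> m)))\<^sup>2 / real (nseq \<alpha> m)) \<le> 4 * \<alpha> / (\<alpha> - 1) * y"
proof -
  let ?n = "\<lambda>m. real (nseq \<alpha> m)"
  have nb: "1 \<le> ?n m" "?n m \<le> \<alpha> ^ m" "\<alpha> ^ m \<le> 2 * ?n m" for m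
    using nseq_bounds[of \<alpha> m] a by auto
  define F1 where "F1 = F \<inter> {m. ?n m \<le> y}"
  define F2 where "F2 = F - {m. ?n m \<le> y}"
  have split: "(\<Sum>m\<in>F. (min y (?n m))\<^sup>2 / ?n m) = (\<Sum>m\<in>F1. (min y (?n m))\<^sup>2 / ?n m) + (\<Sum>m\<in>F2. (min y (?n m))\<^sup>2 / ?n m)"
    unfolding F1_def F2_def using sum.Int_Diff[OF F] by blast
  have s1: "(\<Sum>m\<in>F1. (min y (?n m))\<^sup>2 / ?n m) \<le> 2 * y * \<alpha> / (\<alpha> - 1)"
  proof -
    have "(\<Sum>m\<in>F1. (min y (?n m))\<^sup>2 / ?n m) = (\<Sum>m\<in>F1. ?n m)"
    proof (rule sum.cong)
      fix m assume "m \<in> F1"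
      then have "min y (?n m) = ?n m" unfolding F1_def by auto
      then show "(min y (?n m))\<^sup>2 / ?n m = ?n m" using nb(1)[of m] by (simp add: power2_eq_square)
    qed simp
    also have "\<dots> \<le> (\<Sum>m\<in>F1. \<alpha> ^ m)" by (rule sum_mono) (use nb in auto)
    also have "\<dots> \<le> (2 * y) * \<alpha> / (\<alpha> - 1)"
    proof (rule geom2)
      show "finite F1" using F unfolding F1_def by auto
      fix m assume "m \<in> F1"
      then show "\<alpha> ^ m \<le> 2 * y" using nb[of m] unfolding F1_def by auto
    qed (use a y in auto)
    finally show ?thesis by simp
  qed
  have s2: "(\<Sum>m\<in>F2. (min y (?n m))\<^sup>2 / ?n m) \<le> 2 * y * \<alpha> / (\<alpha> - 1)"
  proof (cases "y = 0")
    case True then show ?thesis by simp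
  next
    case False
    then have yp: "0 < y" using y by simp
    have "(\<Sum>m\<in>F2. (min y (?n m))\<^sup>2 / ?n m) \<le> (\<Sum>m\<in>F2. 2 * y\<^sup>2 * (1 / \<alpha>) ^ m)"
    proof (rule sum_mono)
      fix m assume "m \<in> F2"
      then have "min y (?n m) = y" unfolding F2_def by auto
      moreover have "y\<^sup>2 / ?n m \<le> 2 * y\<^sup>2 * (1 / \<alpha>) ^ m"
      proof -
        have "y\<^sup>2 / ?n m \<le> y\<^sup>2 / (\<alpha> ^ m / 2)"
          by (rule divide_left_mono) (use nb[of m] a in auto)
        also have "\<dots> = 2 * y\<^sup>2 * (1 / \<alpha>) ^ m" by (simp add: power_one_over)
        finally show ?thesis .
      qed
      ultimately show "(min y (?n m))\<^sup>2 / ?n m \<le> 2 * y\<^sup>2 * (1 / \<alpha>) ^ m" by simp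
    qed
    also have "\<dots> = 2 * y\<^sup>2 * (\<Sum>m\<in>F2. (1 / \<alpha>) ^ m)" by (simp add: sum_distrib_left)
    also have "(\<Sum>m\<in>F2. (1 / \<alpha>) ^ m) \<le> (1 / y) / (1 - 1 / \<alpha>)"
    proof (rule geom1)
      show "finite F2" using F unfolding F2_def by auto
      fix m assume "m \<in> F2"
      then have "y < \<alpha> ^ m" using nb[of m] unfolding F2_def by auto
      then show "(1 / \<alpha>) ^ m \<le> 1 / y" using yp by (simp add: power_one_over frac_le)
    qed (use a yp in auto)
    also have "(1 / y) / (1 - 1 / \<alpha>) = \<alpha> / (y * (\<alpha> - 1))"
      using a yp by (simp add: field_simps)
    finally have "(\<Sum>m\<in>F2. (min y (?n m))\<^sup>2 / ?n m) \<le> 2 * y\<^sup>2 * (\<alpha> / (y * (\<alpha> - 1)))"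
      by (simp add: mult_left_mono)
    also have "\<dots> = 2 * y * \<alpha> / (\<alpha> - 1)" using yp a by (simp add: field_simps power2_eq_square)
    finally show ?thesis .
  qed
  have "2 * y * \<alpha> / (\<alpha> - 1) + 2 * y * \<alpha> / (\<alpha> - 1) = 4 * \<alpha> / (\<alpha> - 1) * y"
    by (simp add: field_simps)
  then show ?thesis using split s1 s2 by linarith
qed

lemma pointwise2:
  fixes \<alpha> j :: real
  assumes a: "1 < \<alpha>" and j: "0 < j" and F: "finite F"
  shows "(\<Sum>m\<in>{m\<in>F. j \<le> real (nseq \<alpha> m)}. 1 / (real (nseq \<alpha> m))\<^sup>2) \<le> 4 * \<alpha>\<^sup>2 / (\<alpha>\<^sup>2 - 1) / j\<^sup>2"
proof -
  let ?n = "\<lambda>m. real (nseq \<alpha> m)"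
  have nb: "1 \<le> ?n m" "?n m \<le> \<alpha> ^ m" "\<alpha> ^ m \<le> 2 * ?n m" for m
    using nseq_bounds[of \<alpha> m] a by auto
  let ?F = "{m\<in>F. j \<le> ?n m}"
  have "(\<Sum>m\<in>?F. 1 / (?n m)\<^sup>2) \<le> (\<Sum>m\<in>?F. 4 * (1 / \<alpha>\<^sup>2) ^ m)"
  proof (rule sum_mono)
    fix m
    have "(\<alpha> ^ m)\<^sup>2 \<le> (2 * ?n m)\<^sup>2" by (rule power_mono) (use nb[of m] a in auto)
    then have "1 / (?n m)\<^sup>2 \<le> 4 / (\<alpha> ^ m)\<^sup>2"
      using nb[of m] a by (simp add: field_simps power2_eq_square)
    also have "\<dots> = 4 * (1 / \<alpha>\<^sup>2) ^ m" by (simp add: power_one_over power_mult_distrib[symmetric] power_mult[symmetric] mult.commute)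
    finally show "1 / (?n m)\<^sup>2 \<le> 4 * (1 / \<alpha>\<^sup>2) ^ m" .
  qed
  also have "\<dots> = 4 * (\<Sum>m\<in>?F. (1 / \<alpha>\<^sup>2) ^ m)" by (simp add: sum_distrib_left)
  also have "(\<Sum>m\<in>?F. (1 / \<alpha>\<^sup>2) ^ m) \<le> (1 / j\<^sup>2) / (1 - 1 / \<alpha>\<^sup>2)"
  proof (rule geom1)
    show "finite ?F" using F by auto
    fix m assume "m \<in> ?F"
    then have "j \<le> \<alpha> ^ m" using nb[of m] by auto
    then have "j\<^sup>2 \<le> (\<alpha> ^ m)\<^sup>2" using j by (simp add: power_mono)
    then show "(1 / \<alpha>\<^sup>2) ^ m \<le> 1 / j\<^sup>2" using j a
      by (simp add: power_one_over frac_le power_mult[symmetric] power_mult_distrib mult.commute)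
  qed (use a j in \<open>auto simp: power_less_one_iff\<close>)
  also have "(1 / j\<^sup>2) / (1 - 1 / \<alpha>\<^sup>2) = \<alpha>\<^sup>2 / (\<alpha>\<^sup>2 - 1) / j\<^sup>2"
    using a j by (simp add: field_simps)
  finally show ?thesis by simp
qed

lemma count_le:
  fixes y :: real
  assumes "0 \<le> y"
  shows "(\<Sum>k=1..n. (if real k < y then 1 else 0 :: real)) \<le> y"
proof (induction n)
  case 0 then show ?case using assms by simp
next
  case (Suc n)
  show ?case
  proof (cases "real (Suc n) < y")
    case True
    have "(\<Sum>k=1..Suc n. (if real k < y then 1 else 0 :: real)) \<le> (\<Sum>k=1..Suc n. (1::real))"
      by (rule sum_mono) auto
    then show ?thesis using True by simp
  next
    case False
    then show ?thesis using Suc by simp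
  qed
qed

lemma cesaro_weighted:
  fixes b d e :: "nat \<Rightarrow> real"
  assumes b: "\<And>k. 0 \<le> b k" and d: "\<And>k. 0 \<le> d k" "\<And>k. d k \<le> e k"
    and e: "e \<longlonglongrightarrow> 0" and sb: "\<And>n. (\<Sum>k=1..n. b k) \<le> \<beta> * real n"
  shows "(\<lambda>n. (\<Sum>k=1..n. b k * d k) / real n) \<longlonglongrightarrow> 0"
proof (rule LIMSEQ_I)
  fix r :: real assume r: "0 < r"
  have \<beta>: "0 \<le> \<beta>" using sb[of 1] b[of 1] by simp
  define \<epsilon> where "\<epsilon> = r / (2 * (\<beta> + 1))"
  have \<epsilon>: "0 < \<epsilon>" using r \<beta> unfolding \<epsilon>_def by simp
  obtain K where K: "\<And>k. K \<le> k \<Longrightarrow> \<bar>e k\<bar> < \<epsilon>"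
    using LIMSEQ_D[OF e \<epsilon>] by auto
  define c where "c = (\<Sum>k=1..K. b k * d k)"
  have c: "0 \<le> c" unfolding c_def using b d by (simp add: sum_nonneg)
  obtain N where N: "c / r * 2 < real N" using reals_Archimedean2 by blast
  show "\<exists>no. \<forall>n\<ge>no. norm ((\<Sum>k=1..n. b k * d k) / real n - 0) < r"
  proof (intro exI[of _ "max (Suc N) K"] allI impI)
    fix n assume n: "max (Suc N) K \<le> n"
    then have npos: "0 < real n" by simp
    have e: "{1..n} = {1..K} \<union> {Suc K..n}" using n by auto
    have split: "(\<Sum>k=1..n. b k * d k) = c + (\<Sum>k=Suc K..n. b k * d k)"
      unfolding c_def e by (rule sum.union_disjoint) auto
    have "(\<Sum>k=Suc K..n. b k * d k) \<le> (\<Sum>k=Suc K..n. b k * \<epsilon>)"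
    proof (rule sum_mono)
      fix k assume "k \<in> {Suc K..n}"
      then have "d k \<le> \<epsilon>" using K[of k] d[of k] by auto
      then show "b k * d k \<le> b k * \<epsilon>" using b[of k] by (simp add: mult_left_mono)
    qed
    also have "\<dots> \<le> (\<Sum>k=1..n. b k) * \<epsilon>"
      by (simp add: sum_distrib_right[symmetric]) (rule mult_right_mono, rule sum_mono2, use b \<epsilon> in auto)
    also have "\<dots> \<le> \<beta> * real n * \<epsilon>" using sb[of n] \<epsilon> by (simp add: mult_right_mono)
    finally have t: "(\<Sum>k=Suc K..n. b k * d k) \<le> \<beta> * real n * \<epsilon>" .
    have nn: "0 \<le> (\<Sum>k=1..n. b k * d k)" using b d by (simp add: sum_nonneg)
    have "c < r / 2 * real n"
    proof -
      have "c / r * 2 < real n" using N n by linarith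
      then show ?thesis using r by (simp add: field_simps)
    qed
    moreover have "\<beta> * real n * \<epsilon> \<le> r / 2 * real n"
    proof -
      have "\<beta> * \<epsilon> \<le> r / 2" unfolding \<epsilon>_def using \<beta> r by (simp add: field_simps)
      then show ?thesis using npos by (simp add: mult.commute mult.left_commute mult_right_mono)
    qed
    ultimately have "(\<Sum>k=1..n. b k * d k) < r * real n" using split t by linarith
    then show "norm ((\<Sum>k=1..n. b k * d k) / real n - 0) < r"
      using nn npos by (simp add: field_simps)
  qed
qed

lemma double_sum_sym:
  fixes g :: "nat \<Rightarrow> nat \<Rightarrow> real"
  assumes sym: "\<And>k j. g k j = g j k"
  shows "(\<Sum>k=1..n. \<Sum>j=1..n. g k j) = (\<Sum>k=1..n. g k k) + 2 * (\<Sum>j=1..n. \<Sum>k=1..<j. g k j)"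
proof (induction n)
  case 0 then show ?case by simp
next
  case (Suc n)
  have "(\<Sum>k=1..Suc n. \<Sum>j=1..Suc n. g k j) = (\<Sum>k=1..n. \<Sum>j=1..Suc n. g k j) + (\<Sum>j=1..Suc n. g (Suc n) j)"
    by simp
  also have "(\<Sum>k=1..n. \<Sum>j=1..Suc n. g k j) = (\<Sum>k=1..n. \<Sum>j=1..n. g k j) + (\<Sum>k=1..n. g k (Suc n))"
    by (simp add: sum.distrib)
  also have "(\<Sum>j=1..Suc n. g (Suc n) j) = (\<Sum>j=1..n. g j (Suc n)) + g (Suc n) (Suc n)"
    by (simp add: sym)
  also have "(\<Sum>k=1..n. g k (Suc n)) = (\<Sum>k=1..<Suc n. g k (Suc n))"
    by (simp add: atLeastLessThanSuc_atLeastAtMost)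
  finally show ?case using Suc by (simp add: atLeastLessThanSuc_atLeastAtMost)
qed

lemma nseq_set_finite:
  assumes a: "1 < \<alpha>"
  shows "finite {m. nseq \<alpha> m \<le> n}"
proof -
  obtain N where N: "2 * real n < \<alpha> ^ N" using real_arch_pow[OF a] by blast
  have "{m. nseq \<alpha> m \<le> n} \<subseteq> {..<N}"
  proof
    fix m assume "m \<in> {m. nseq \<alpha> m \<le> n}"
    then have "\<alpha> ^ m \<le> 2 * real n" using nseq_bounds(3)[of \<alpha> m] a by auto
    then have "\<not> N \<le> m" using N a by (meson le_less_trans not_le power_increasing_iff)
    then show "m \<in> {..<N}" by simp
  qed
  then show ?thesis by (rule finite_subset) simp
qed

lemma interp:
  fixes S E :: "nat \<Rightarrow> real" and \<alpha> D \<delta> :: real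
  assumes a: "1 < \<alpha>"
    and Smono: "\<And>n n'. n \<le> n' \<Longrightarrow> S n \<le> S n'" and Emono: "\<And>n n'. n \<le> n' \<Longrightarrow> E n \<le> E n'"
    and lim: "(\<lambda>m. (S (nseq \<alpha> m) - E (nseq \<alpha> m)) / real (nseq \<alpha> m)) \<longlonglongrightarrow> 0"
    and inc: "eventually (\<lambda>m. E (nseq \<alpha> (Suc m)) - E (nseq \<alpha> m) \<le> D * real (nseq \<alpha> m)) sequentially"
    and \<delta>: "0 < \<delta>"
  shows "eventually (\<lambda>n. \<bar>S n - E n\<bar> / real n \<le> D + (1 + 2 * \<alpha>) * \<delta>) sequentially"
proof -
  let ?n = "nseq \<alpha>"
  let ?T = "\<lambda>n. S n - E n"
  have "eventually (\<lambda>m. \<bar>?T (?n m) / real (?n m)\<bar> < \<delta>) sequentially"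
    using lim \<delta> by (simp add: tendsto_iff dist_real_def)
  then have "eventually (\<lambda>m. \<bar>?T (?n m) / real (?n m)\<bar> < \<delta> \<and> E (?n (Suc m)) - E (?n m) \<le> D * real (?n m)) sequentially"
    using inc by eventually_elim auto
  then obtain M0 where M0: "\<And>m. M0 \<le> m \<Longrightarrow> \<bar>?T (?n m) / real (?n m)\<bar> < \<delta> \<and> E (?n (Suc m)) - E (?n m) \<le> D * real (?n m)"
    by (auto simp: eventually_sequentially)
  have nb: "1 \<le> ?n m" "real (?n m) \<le> \<alpha> ^ m" "\<alpha> ^ m \<le> 2 * real (?n m)" for m
    using nseq_bounds[of \<alpha> m] a by auto
  show ?thesis unfolding eventually_sequentially
  proof (intro exI[of _ "?n M0"] allI impI)
    fix n assume n: "?n M0 \<le> n"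
    define A where "A = {m. ?n m \<le> n}"
    have finA: "finite A" unfolding A_def by (rule nseq_set_finite[OF a])
    have M0A: "M0 \<in> A" unfolding A_def using n by simp
    define m where "m = Max A"
    have mA: "m \<in> A" unfolding m_def by (rule Max_in) (use finA M0A in auto)
    have mM0: "M0 \<le> m" unfolding m_def using finA M0A by simp
    have "Suc m \<notin> A" using Max_ge[OF finA, of "Suc m"] unfolding m_def[symmetric] by auto
    then have n2: "n < ?n (Suc m)" unfolding A_def by simp
    have n1: "?n m \<le> n" using mA unfolding A_def by simp
    have P0: "\<bar>?T (?n k)\<bar> \<le> \<delta> * real (?n k)" if "M0 \<le> k" for k
    proof -
      have "\<bar>?T (?n k) / real (?n k)\<bar> < \<delta>" using M0[OF that] by blast
      moreover have "\<bar>?T (?n k) / real (?n k)\<bar> = \<bar>?T (?n k)\<bar> / real (?n k)"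
        by (simp add: abs_divide)
      moreover have "0 < real (?n k)" using nb(1)[of k] by simp
      ultimately have "\<bar>?T (?n k)\<bar> < \<delta> * real (?n k)"
        by (simp add: pos_divide_less_eq)
      then show ?thesis by simp
    qed
    have P1: "\<bar>?T (?n m)\<bar> \<le> \<delta> * real (?n m)" using P0 mM0 by blast
    have P2: "\<bar>?T (?n (Suc m))\<bar> \<le> \<delta> * real (?n (Suc m))" using P0 mM0 by simp
    have Dl: "E (?n (Suc m)) - E (?n m) \<le> D * real (?n m)" using M0[OF mM0] by simp
    have ratio: "real (?n (Suc m)) \<le> 2 * \<alpha> * real (?n m)"
    proof -
      have "real (?n (Suc m)) \<le> \<alpha> * \<alpha> ^ m" using nb(2)[of "Suc m"] by simp
      also have "\<dots> \<le> \<alpha> * (2 * real (?n m))" using nb(3)[of m] a by (simp add: mult_left_mono)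
      finally show ?thesis by simp
    qed
    have up: "?T n \<le> ?T (?n (Suc m)) + (E (?n (Suc m)) - E (?n m))"
      using Smono[of n "?n (Suc m)"] Emono[of "?n m" n] n1 n2 by simp
    have lo: "?T n \<ge> ?T (?n m) - (E (?n (Suc m)) - E (?n m))"
      using Smono[of "?n m" n] Emono[of n "?n (Suc m)"] n1 n2 by simp
    have "\<delta> * real (?n (Suc m)) \<le> \<delta> * (2 * \<alpha> * real (?n m))"
      using ratio \<delta> by (simp add: mult_left_mono)
    then have P2': "\<bar>?T (?n (Suc m))\<bar> \<le> 2 * \<alpha> * \<delta> * real (?n m)"
      using P2 by (simp add: mult.assoc mult.left_commute)
    have ab: "\<bar>?T n\<bar> \<le> \<bar>?T (?n m)\<bar> + \<bar>?T (?n (Suc m))\<bar> + (E (?n (Suc m)) - E (?n m))"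
      using up lo abs_ge_self[of "?T (?n m)"] abs_ge_minus_self[of "?T (?n m)"]
        abs_ge_self[of "?T (?n (Suc m))"] abs_ge_minus_self[of "?T (?n (Suc m))"]
      unfolding abs_le_iff by linarith
    have eq: "(D + (1 + 2 * \<alpha>) * \<delta>) * real (?n m) = \<delta> * real (?n m) + 2 * \<alpha> * \<delta> * real (?n m) + D * real (?n m)"
      by (simp add: algebra_simps)
    have main: "\<bar>?T n\<bar> \<le> (D + (1 + 2 * \<alpha>) * \<delta>) * real (?n m)"
      unfolding eq using ab P1 P2' Dl by linarith
    have Kn: "0 \<le> D + (1 + 2 * \<alpha>) * \<delta>"
    proof (rule ccontr)
      assume "\<not> ?thesis"
      then have "(D + (1 + 2 * \<alpha>) * \<delta>) * real (?n m) < 0" using nb(1)[of m]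
        by (simp add: mult_neg_pos)
      then show False using main by linarith
    qed
    have "(D + (1 + 2 * \<alpha>) * \<delta>) * real (?n m) \<le> (D + (1 + 2 * \<alpha>) * \<delta>) * real n"
      using Kn n1 by (simp add: mult_left_mono)
    then have "\<bar>?T n\<bar> \<le> (D + (1 + 2 * \<alpha>) * \<delta>) * real n" using main by linarith
    moreover have "0 < real n" using n nb(1)[of M0] by simp
    ultimately show "\<bar>S n - E n\<bar> / real n \<le> D + (1 + 2 * \<alpha>) * \<delta>"
      by (simp add: pos_divide_le_eq)
  qed
qed

lemma count_le2:
  fixes y :: real
  assumes "0 \<le> y"
  shows "(\<Sum>k<n. (if real k < y then 1 else 0 :: real)) \<le> y + 1"
proof (induction n)
  case 0 then show ?case using assms by simp
next
  case (Suc n)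
  show ?case
  proof (cases "real n < y")
    case True
    have "(\<Sum>k<Suc n. (if real k < y then 1 else 0 :: real)) \<le> (\<Sum>k<Suc n. (1::real))"
      by (rule sum_mono) auto
    then show ?thesis using True by simp
  next
    case False
    then show ?thesis using Suc by simp
  qed
qed

lemma sq_lt_iff: fixes s m :: real assumes "0 \<le> m" shows "s < m\<^sup>2 \<longleftrightarrow> sqrt s < m"
proof -
  have "sqrt (m\<^sup>2) = m" using assms by simp
  then show ?thesis by (metis real_sqrt_less_iff)
qed
lemma sq_min_iff: fixes s z n :: real
  assumes "s < n\<^sup>2" "0 \<le> z" "0 \<le> n"
  shows "s < (min z n)\<^sup>2 \<longleftrightarrow> sqrt s < z"
proof -
  have "sqrt s < n" using sq_lt_iff[OF assms(3)] assms(1) by simp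
  moreover have "s < (min z n)\<^sup>2 \<longleftrightarrow> sqrt s < min z n" by (rule sq_lt_iff) (use assms in simp)
  ultimately show ?thesis by auto
qed

locale nnsetup = prob_space +
  fixes Z :: "nat \<Rightarrow> 'a \<Rightarrow> real" and b :: "nat \<Rightarrow> real" and Y :: "'a \<Rightarrow> real"
    and C B K0 :: real and H :: "nat \<Rightarrow> nat \<Rightarrow> real"
  assumes Zm: "\<And>k. 1 \<le> k \<Longrightarrow> Z k \<in> borel_measurable M"
    and Zn: "\<And>k \<omega>. 1 \<le> k \<Longrightarrow> \<omega> \<in> space M \<Longrightarrow> 0 \<le> Z k \<omega>"
    and Ym[measurable]: "Y \<in> borel_measurable M" and iY: "integrable M Y"
    and C: "0 \<le> C"
    and dom: "\<And>k s. 1 \<le> k \<Longrightarrow> 0 < s \<Longrightarrow> prob {\<omega>\<in>space M. s < Z k \<omega>} \<le> C * prob {\<omega>\<in>space M. s < \<bar>Y \<omega>\<bar>}"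
    and bn: "\<And>k. 0 \<le> b k"
    and Bb: "\<And>n. (\<Sum>k=1..n. (b k)\<^sup>2) \<le> B * real n"
    and cov: "\<And>k j. 1 \<le> k \<Longrightarrow> k < j \<Longrightarrow>
       expectation (\<lambda>\<omega>. min (Z k \<omega>) (real k) * min (Z j \<omega>) (real j))
       - expectation (\<lambda>\<omega>. min (Z k \<omega>) (real k)) * expectation (\<lambda>\<omega>. min (Z j \<omega>) (real j)) \<le> H k j"
    and Hn: "\<And>k j. 0 \<le> H k j"
    and Hsum: "\<And>n. (\<Sum>j=1..n. \<Sum>k=1..<j. b k * b j * H k j / (real j)\<^sup>2) \<le> K0"
begin

definition W where "W k \<omega> = min (Z k \<omega>) (real k)"
definition \<nu> where "\<nu> k = expectation (W k)"
definition \<mu> where "\<mu> k = expectation (Z k)"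
definition L where "L = C * expectation (\<lambda>\<omega>. \<bar>Y \<omega>\<bar>)"

lemma Wm: "1 \<le> k \<Longrightarrow> W k \<in> borel_measurable M"
  unfolding W_def using Zm[of k] by measurable

lemma Wb: "1 \<le> k \<Longrightarrow> \<omega> \<in> space M \<Longrightarrow> 0 \<le> W k \<omega> \<and> W k \<omega> \<le> real k"
  unfolding W_def using Zn[of k \<omega>] by auto

lemma Wi: "1 \<le> k \<Longrightarrow> integrable M (W k)"
  by (rule integrable_const_bound[where B="real k"]) (use Wb Wm in auto)

lemma Zi: "1 \<le> k \<Longrightarrow> integrable M (Z k)" and \<mu>L: "1 \<le> k \<Longrightarrow> \<mu> k \<le> L"
proof -
  assume k: "1 \<le> k"
  have "integrable M (Z k) \<and> expectation (Z k) \<le> C * expectation (\<lambda>\<omega>. \<bar>Y \<omega>\<bar>)"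
    using dom_int[of "Z k" "\<lambda>\<omega>. \<bar>Y \<omega>\<bar>" C] Zm[OF k] Zn[OF k] C dom[OF k] iY by auto
  then show "integrable M (Z k)" "\<mu> k \<le> L" unfolding \<mu>_def L_def by auto
qed

lemma \<nu>_le: "1 \<le> k \<Longrightarrow> 0 \<le> \<nu> k \<and> \<nu> k \<le> \<mu> k"
proof -
  assume k: "1 \<le> k"
  have "0 \<le> \<nu> k" unfolding \<nu>_def using Wb[OF k] by (simp add: integral_nonneg_AE)
  moreover have "\<nu> k \<le> \<mu> k" unfolding \<nu>_def \<mu>_def
    by (rule integral_mono) (use Wi[OF k] Zi[OF k] in \<open>auto simp: W_def\<close>)
  ultimately show ?thesis by simp
qed

lemma L_nn: "0 \<le> L" unfolding L_def using C by (simp add: integral_nonneg_AE)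

lemma EW2: assumes k: "1 \<le> k" "k \<le> n"
  shows "expectation (\<lambda>\<omega>. (W k \<omega>)\<^sup>2) \<le> C * expectation (\<lambda>\<omega>. (min \<bar>Y \<omega>\<bar> (real n))\<^sup>2)"
proof -
  have [measurable]: "Z k \<in> borel_measurable M" using Zm k by simp
  let ?U = "\<lambda>\<omega>. (min (Z k \<omega>) (real n))\<^sup>2"
  let ?V = "\<lambda>\<omega>. (min \<bar>Y \<omega>\<bar> (real n))\<^sup>2"
  have iV: "integrable M ?V"
    by (rule integrable_const_bound[where B="(real n)\<^sup>2"]) (auto simp: abs_le_square_iff)
  have d: "prob {\<omega>\<in>space M. s < ?U \<omega>} \<le> C * prob {\<omega>\<in>space M. s < ?V \<omega>}" if s: "0 < s" for s
  proof (cases "s < (real n)\<^sup>2")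
    case True
    have e1: "{\<omega>\<in>space M. s < ?U \<omega>} = {\<omega>\<in>space M. sqrt s < Z k \<omega>}"
      using sq_min_iff[OF True] Zn[OF k(1)] by auto
    have e2: "{\<omega>\<in>space M. s < ?V \<omega>} = {\<omega>\<in>space M. sqrt s < \<bar>Y \<omega>\<bar>}"
      using sq_min_iff[OF True] by auto
    show ?thesis unfolding e1 e2 by (rule dom[OF k(1)]) (use s in simp)
  next
    case False
    have e0: "{\<omega>\<in>space M. s < ?U \<omega>} = {}"
    proof -
      have "(min z (real n))\<^sup>2 \<le> (real n)\<^sup>2" if "0 \<le> z" for z
        using that by (simp add: power_mono)
      have "\<not> s < ?U \<omega>" if "\<omega> \<in> space M" for \<omega>
      proof -
        have "?U \<omega> \<le> (real n)\<^sup>2" using \<open>\<And>z. 0 \<le> z \<Longrightarrow> _\<close>[of "Z k \<omega>"] Zn[OF k(1) that] by simp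
        then show ?thesis using False by linarith
      qed
      then show ?thesis by blast
    qed
    show ?thesis unfolding e0 using C by simp
  qed
  have "expectation ?U \<le> C * expectation ?V"
    by (rule dom_int(2)[OF _ _ _ _ C d iV]) auto
  moreover have "expectation (\<lambda>\<omega>. (W k \<omega>)\<^sup>2) \<le> expectation ?U"
  proof (rule integral_mono)
    show "integrable M (\<lambda>\<omega>. (W k \<omega>)\<^sup>2)"
      by (rule integrable_const_bound[where B="(real k)\<^sup>2"]) (use Wb[OF k(1)] Wm[OF k(1)] in \<open>auto simp: power_mono\<close>)
    show "integrable M ?U"
      by (rule integrable_const_bound[where B="(real n)\<^sup>2"]) (use Zn[OF k(1)] in \<open>auto simp: power_mono\<close>)
    fix \<omega> assume "\<omega> \<in> space M"
    then show "(W k \<omega>)\<^sup>2 \<le> ?U \<omega>" using Zn[OF k(1)] k unfolding W_def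
      by (intro power_mono) auto
  qed
  ultimately show ?thesis by linarith
qed

end

context nnsetup begin

lemma tail: assumes k: "1 \<le> k"
  shows "\<mu> k - \<nu> k \<le> C * expectation (\<lambda>\<omega>. max (\<bar>Y \<omega>\<bar> - real k) 0)"
proof -
  have [measurable]: "Z k \<in> borel_measurable M" using Zm k by simp
  let ?U = "\<lambda>\<omega>. max (Z k \<omega> - real k) 0"
  let ?V = "\<lambda>\<omega>. max (\<bar>Y \<omega>\<bar> - real k) 0"
  have iV: "integrable M ?V"
    by (rule Bochner_Integration.integrable_bound[OF integrable_abs[OF iY]]) auto
  have d: "prob {\<omega>\<in>space M. s < ?U \<omega>} \<le> C * prob {\<omega>\<in>space M. s < ?V \<omega>}" if s: "0 < s" for s
  proof -
    have e1: "{\<omega>\<in>space M. s < ?U \<omega>} = {\<omega>\<in>space M. real k + s < Z k \<omega>}" using s by auto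
    have e2: "{\<omega>\<in>space M. s < ?V \<omega>} = {\<omega>\<in>space M. real k + s < \<bar>Y \<omega>\<bar>}" using s by auto
    show ?thesis unfolding e1 e2 by (rule dom[OF k]) (use s in simp)
  qed
  have "expectation ?U \<le> C * expectation ?V"
    by (rule dom_int(2)[OF _ _ _ _ C d iV]) auto
  moreover have "\<mu> k - \<nu> k = expectation ?U"
  proof -
    have "\<mu> k - \<nu> k = expectation (\<lambda>\<omega>. Z k \<omega> - W k \<omega>)"
      unfolding \<mu>_def \<nu>_def using Zi[OF k] Wi[OF k] by simp
    also have "\<dots> = expectation ?U"
      by (rule Bochner_Integration.integral_cong) (auto simp: W_def)
    finally show ?thesis .
  qed
  ultimately show ?thesis by simp
qed

lemma e_lim: "(\<lambda>k. expectation (\<lambda>\<omega>. max (\<bar>Y \<omega>\<bar> - real k) 0)) \<longlonglongrightarrow> 0"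
proof -
  have "(\<lambda>k. expectation (\<lambda>\<omega>. max (\<bar>Y \<omega>\<bar> - real k) 0)) \<longlonglongrightarrow> expectation (\<lambda>\<omega>. 0::real)"
  proof (rule integral_dominated_convergence[where w="\<lambda>\<omega>. \<bar>Y \<omega>\<bar>"])
    show "integrable M (\<lambda>\<omega>. \<bar>Y \<omega>\<bar>)" using iY by simp
    show "AE \<omega> in M. (\<lambda>k. max (\<bar>Y \<omega>\<bar> - real k) 0) \<longlonglongrightarrow> 0"
    proof (rule AE_I2)
      fix \<omega>
      obtain N :: nat where "\<bar>Y \<omega>\<bar> \<le> real N" using real_arch_simple by blast
      then have "eventually (\<lambda>k. max (\<bar>Y \<omega>\<bar> - real k) 0 = 0) sequentially"
        unfolding eventually_sequentially by (intro exI[of _ N]) auto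
      then show "(\<lambda>k. max (\<bar>Y \<omega>\<bar> - real k) 0) \<longlonglongrightarrow> 0" by (rule tendsto_eventually)
    qed
  qed auto
  then show ?thesis by simp
qed

lemma part2: "(\<lambda>n. (\<Sum>k=1..n. b k * (\<mu> k - \<nu> k)) / real n) \<longlonglongrightarrow> 0"
proof -
  define d where "d k = (if k = 0 then 0 else \<mu> k - \<nu> k)" for k
  define e where "e k = C * expectation (\<lambda>\<omega>. max (\<bar>Y \<omega>\<bar> - real k) 0)" for k
  have "(\<lambda>n. (\<Sum>k=1..n. b k * d k) / real n) \<longlonglongrightarrow> 0"
  proof (rule cesaro_weighted[where e=e and \<beta>="1 + B"])
    show "0 \<le> b k" for k by (rule bn)
    show "0 \<le> d k" for k unfolding d_def using \<nu>_le[of k] by auto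
    show "d k \<le> e k" for k
    proof (cases "k = 0")
      case True
      then show ?thesis unfolding d_def e_def using C by (simp add: integral_nonneg_AE)
    qed (use tail in \<open>auto simp: d_def e_def\<close>)
    show "e \<longlonglongrightarrow> 0" unfolding e_def using tendsto_mult_right_zero[OF e_lim] by simp
    show "(\<Sum>k=1..n. b k) \<le> (1 + B) * real n" for n
    proof -
      have "(\<Sum>k=1..n. b k) \<le> (\<Sum>k=1..n. 1 + (b k)\<^sup>2)"
      proof (rule sum_mono)
        fix k
        have "0 \<le> (b k - 1)\<^sup>2 + b k" using bn[of k] by simp
        then show "b k \<le> 1 + (b k)\<^sup>2" by (simp add: power2_eq_square algebra_simps)
      qed
      also have "\<dots> = real n + (\<Sum>k=1..n. (b k)\<^sup>2)" by (simp add: sum.distrib)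
      also have "\<dots> \<le> (1 + B) * real n" using Bb[of n] by (simp add: algebra_simps)
      finally show ?thesis .
    qed
  qed
  moreover have "(\<Sum>k=1..n. b k * d k) = (\<Sum>k=1..n. b k * (\<mu> k - \<nu> k))" for n
    by (rule sum.cong) (auto simp: d_def)
  ultimately show ?thesis by simp
qed

lemma part1: "AE \<omega> in M. (\<lambda>n. (\<Sum>k=1..n. b k * (Z k \<omega> - W k \<omega>)) / real n) \<longlonglongrightarrow> 0"
proof -
  define A where "A k = (if k = 0 then {} else {\<omega>\<in>space M. real k < Z k \<omega>})" for k
  have Am[measurable]: "A k \<in> events" for k
    unfolding A_def using Zm[of k] by auto
  define f where "f k = prob {\<omega>\<in>space M. real k < \<bar>Y \<omega>\<bar>}" for k
  have fs: "summable f"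
  proof (rule summableI_nonneg_bounded[where x="expectation (\<lambda>\<omega>. \<bar>Y \<omega>\<bar>) + 1"])
    show "0 \<le> f n" for n unfolding f_def by simp
    fix n
    have ms[measurable]: "(\<lambda>\<omega>. if real k < \<bar>Y \<omega>\<bar> then (1::real) else 0) \<in> borel_measurable M" for k
      by measurable
    have ms2: "(\<lambda>\<omega>. \<Sum>k<n. (if real k < \<bar>Y \<omega>\<bar> then (1::real) else 0)) \<in> borel_measurable M"
      by measurable
    have "(\<Sum>k<n. f k) = (\<Sum>k<n. expectation (\<lambda>\<omega>. if real k < \<bar>Y \<omega>\<bar> then (1::real) else 0))"
      unfolding f_def by (rule sum.cong[OF refl], rule expect_ind[symmetric]) simp
    also have "\<dots> = expectation (\<lambda>\<omega>. \<Sum>k<n. (if real k < \<bar>Y \<omega>\<bar> then (1::real) else 0))"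
      by (rule Bochner_Integration.integral_sum[symmetric], rule integrable_const_bound[where B=1]) (simp_all add: ms)
    also have "\<dots> \<le> expectation (\<lambda>\<omega>. \<bar>Y \<omega>\<bar> + 1)"
    proof (rule integral_mono)
      show "integrable M (\<lambda>\<omega>. \<Sum>k<n. (if real k < \<bar>Y \<omega>\<bar> then 1 else 0::real))"
      proof (rule integrable_const_bound[where B="real n"])
        show "AE x in M. norm (\<Sum>k<n. (if real k < \<bar>Y x\<bar> then (1::real) else 0)) \<le> real n"
        proof (rule AE_I2)
          fix x
          have "(\<Sum>k<n. (if real k < \<bar>Y x\<bar> then (1::real) else 0)) \<le> (\<Sum>k<n. 1)" by (rule sum_mono) auto
          moreover have "0 \<le> (\<Sum>k<n. (if real k < \<bar>Y x\<bar> then (1::real) else 0))" by (rule sum_nonneg) auto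
          ultimately show "norm (\<Sum>k<n. (if real k < \<bar>Y x\<bar> then (1::real) else 0)) \<le> real n" by simp
        qed
      qed (rule ms2)
      show "integrable M (\<lambda>\<omega>. \<bar>Y \<omega>\<bar> + 1)" using iY by simp
      show "(\<Sum>k<n. (if real k < \<bar>Y \<omega>\<bar> then 1 else 0)) \<le> \<bar>Y \<omega>\<bar> + 1" for \<omega>
        by (rule count_le2) simp
    qed
    also have "\<dots> = expectation (\<lambda>\<omega>. \<bar>Y \<omega>\<bar>) + 1" using iY by (simp add: prob_space)
    finally show "(\<Sum>k<n. f k) \<le> expectation (\<lambda>\<omega>. \<bar>Y \<omega>\<bar>) + 1" .
  qed
  have "summable (\<lambda>k. measure M (A k))"
  proof (rule summable_comparison_test'[where g="\<lambda>k. C * f k"])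
    show "summable (\<lambda>k. C * f k)" using fs by (rule summable_mult)
    fix k :: nat assume "0 \<le> k"
    show "norm (measure M (A k)) \<le> C * f k"
    proof (cases "k = 0")
      case True then show ?thesis using C by (simp add: A_def f_def)
    next
      case False
      then show ?thesis unfolding A_def f_def using dom[of k "real k"] by simp
    qed
  qed
  then have "AE \<omega> in M. eventually (\<lambda>k. \<omega> \<in> space M - A k) sequentially"
    by (intro borel_cantelli_AE1) (auto simp: emeasure_eq_measure)
  then show ?thesis
  proof (rule AE_mp[OF _ AE_I2], intro impI)
    fix \<omega> assume \<omega>: "\<omega> \<in> space M" and ev: "eventually (\<lambda>k. \<omega> \<in> space M - A k) sequentially"
    then obtain K where K: "\<And>k. K \<le> k \<Longrightarrow> \<omega> \<notin> A k" by (auto simp: eventually_sequentially)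
    define c where "c = (\<Sum>k=1..K. b k * (Z k \<omega> - W k \<omega>))"
    have "(\<Sum>k=1..n. b k * (Z k \<omega> - W k \<omega>)) = c" if n: "K \<le> n" for n
    proof -
      have z: "b k * (Z k \<omega> - W k \<omega>) = 0" if "k \<in> {Suc K..n}" for k
      proof -
        have "1 \<le> k" "K \<le> k" using that by auto
        then have "Z k \<omega> \<le> real k" using K[of k] \<omega> unfolding A_def by auto
        then show ?thesis unfolding W_def by simp
      qed
      have e: "{1..n} = {1..K} \<union> {Suc K..n}" using n by auto
      have "(\<Sum>k=1..n. b k * (Z k \<omega> - W k \<omega>)) = c + (\<Sum>k=Suc K..n. b k * (Z k \<omega> - W k \<omega>))"
        unfolding c_def e by (rule sum.union_disjoint) auto
      also have "(\<Sum>k=Suc K..n. b k * (Z k \<omega> - W k \<omega>)) = 0" using z by (intro sum.neutral) blast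
      finally show ?thesis by simp
    qed
    then have ev2: "eventually (\<lambda>n. c / real n = (\<Sum>k=1..n. b k * (Z k \<omega> - W k \<omega>)) / real n) sequentially"
      unfolding eventually_sequentially by auto
    have "(\<lambda>n. c / real n) \<longlonglongrightarrow> 0" by (rule lim_const_over_n)
    then show "(\<lambda>n. (\<Sum>k=1..n. b k * (Z k \<omega> - W k \<omega>)) / real n) \<longlonglongrightarrow> 0"
      by (rule Lim_transform_eventually[OF _ ev2])
  qed
qed

end

context nnsetup begin

definition T where "T n \<omega> = (\<Sum>k=1..n. b k * (W k \<omega> - \<nu> k))"

lemma Tm: "T n \<in> borel_measurable M"
  unfolding T_def by (rule borel_measurable_sum) (use Wm in auto)

lemma B_nn: "0 \<le> B"
proof -
  have "(\<Sum>k=1..1. (b k)\<^sup>2) \<le> B * real 1" by (rule Bb)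
  then have "(b 1)\<^sup>2 \<le> B" by simp
  moreover have "0 \<le> (b 1)\<^sup>2" by simp
  ultimately show ?thesis by linarith
qed

lemma Ui: assumes "1 \<le> k" "1 \<le> j"
  shows "integrable M (\<lambda>\<omega>. (W k \<omega> - \<nu> k) * (W j \<omega> - \<nu> j))"
proof (rule integrable_const_bound[where B="(real k + \<bar>\<nu> k\<bar>) * (real j + \<bar>\<nu> j\<bar>)"])
  show "AE x in M. norm ((W k x - \<nu> k) * (W j x - \<nu> j)) \<le> (real k + \<bar>\<nu> k\<bar>) * (real j + \<bar>\<nu> j\<bar>)"
  proof (rule AE_I2)
    fix x assume x: "x \<in> space M"
    have "\<bar>W k x - \<nu> k\<bar> \<le> real k + \<bar>\<nu> k\<bar>" "\<bar>W j x - \<nu> j\<bar> \<le> real j + \<bar>\<nu> j\<bar>"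
      using Wb[OF assms(1) x] Wb[OF assms(2) x] by auto
    then show "norm ((W k x - \<nu> k) * (W j x - \<nu> j)) \<le> (real k + \<bar>\<nu> k\<bar>) * (real j + \<bar>\<nu> j\<bar>)"
      by (simp add: abs_mult mult_mono')
  qed
  show "(\<lambda>\<omega>. (W k \<omega> - \<nu> k) * (W j \<omega> - \<nu> j)) \<in> borel_measurable M"
    using Wm[OF assms(1)] Wm[OF assms(2)] by measurable
qed

lemma WWi: assumes "1 \<le> k" "1 \<le> j"
  shows "integrable M (\<lambda>\<omega>. W k \<omega> * W j \<omega>)"
proof (rule integrable_const_bound[where B="real k * real j"])
  show "AE x in M. norm (W k x * W j x) \<le> real k * real j"
  proof (rule AE_I2)
    fix x assume x: "x \<in> space M"
    then show "norm (W k x * W j x) \<le> real k * real j"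
      using Wb[OF assms(1) x] Wb[OF assms(2) x] by (simp add: abs_mult mult_mono')
  qed
  show "(\<lambda>\<omega>. W k \<omega> * W j \<omega>) \<in> borel_measurable M"
    using Wm[OF assms(1)] Wm[OF assms(2)] by measurable
qed

lemma EUU: assumes "1 \<le> k" "1 \<le> j"
  shows "expectation (\<lambda>\<omega>. (W k \<omega> - \<nu> k) * (W j \<omega> - \<nu> j)) = expectation (\<lambda>\<omega>. W k \<omega> * W j \<omega>) - \<nu> k * \<nu> j"
proof -
  have "(\<lambda>\<omega>. (W k \<omega> - \<nu> k) * (W j \<omega> - \<nu> j)) = (\<lambda>\<omega>. W k \<omega> * W j \<omega> - \<nu> j * W k \<omega> - \<nu> k * W j \<omega> + \<nu> k * \<nu> j)"
    by (auto simp: fun_eq_iff algebra_simps)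
  then have "expectation (\<lambda>\<omega>. (W k \<omega> - \<nu> k) * (W j \<omega> - \<nu> j)) =
      expectation (\<lambda>\<omega>. W k \<omega> * W j \<omega>) - \<nu> j * expectation (W k) - \<nu> k * expectation (W j) + \<nu> k * \<nu> j"
    using WWi[OF assms] Wi[OF assms(1)] Wi[OF assms(2)] by (simp add: prob_space)
  then show ?thesis unfolding \<nu>_def by simp
qed

lemma ET2: "expectation (\<lambda>\<omega>. (T n \<omega>)\<^sup>2) \<le>
   B * real n * (C * expectation (\<lambda>\<omega>. (min \<bar>Y \<omega>\<bar> (real n))\<^sup>2)) + 2 * (\<Sum>j=1..n. \<Sum>k=1..<j. b k * b j * H k j)"
proof -
  define c where "c k j = expectation (\<lambda>\<omega>. (W k \<omega> - \<nu> k) * (W j \<omega> - \<nu> j))" for k j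
  define g where "g k j = b k * b j * c k j" for k j
  have gs: "g k j = g j k" for k j unfolding g_def c_def by (simp add: mult.commute mult.left_commute)
  have sq: "(T n \<omega>)\<^sup>2 = (\<Sum>k=1..n. \<Sum>j=1..n. b k * b j * ((W k \<omega> - \<nu> k) * (W j \<omega> - \<nu> j)))" for \<omega>
    unfolding T_def power2_eq_square sum_product by (simp add: ac_simps)
  have "expectation (\<lambda>\<omega>. (T n \<omega>)\<^sup>2) = (\<Sum>k=1..n. \<Sum>j=1..n. g k j)"
  proof -
    have "expectation (\<lambda>\<omega>. (T n \<omega>)\<^sup>2) = expectation (\<lambda>\<omega>. \<Sum>k=1..n. \<Sum>j=1..n. b k * b j * ((W k \<omega> - \<nu> k) * (W j \<omega> - \<nu> j)))"
      unfolding sq ..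
    also have "\<dots> = (\<Sum>k=1..n. expectation (\<lambda>\<omega>. \<Sum>j=1..n. b k * b j * ((W k \<omega> - \<nu> k) * (W j \<omega> - \<nu> j))))"
      by (rule Bochner_Integration.integral_sum) (auto intro!: Bochner_Integration.integrable_sum Ui)
    also have "\<dots> = (\<Sum>k=1..n. \<Sum>j=1..n. g k j)"
    proof (rule sum.cong[OF refl])
      fix k assume k: "k \<in> {1..n}"
      have "expectation (\<lambda>\<omega>. \<Sum>j=1..n. b k * b j * ((W k \<omega> - \<nu> k) * (W j \<omega> - \<nu> j))) =
          (\<Sum>j=1..n. expectation (\<lambda>\<omega>. b k * b j * ((W k \<omega> - \<nu> k) * (W j \<omega> - \<nu> j))))"
        by (rule Bochner_Integration.integral_sum) (use k in \<open>auto intro!: Ui\<close>)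
      also have "\<dots> = (\<Sum>j=1..n. g k j)"
        unfolding g_def c_def by simp
      finally show "expectation (\<lambda>\<omega>. \<Sum>j=1..n. b k * b j * ((W k \<omega> - \<nu> k) * (W j \<omega> - \<nu> j))) = (\<Sum>j=1..n. g k j)" .
    qed
    finally show ?thesis .
  qed
  also have "\<dots> = (\<Sum>k=1..n. g k k) + 2 * (\<Sum>j=1..n. \<Sum>k=1..<j. g k j)"
    by (rule double_sum_sym) (rule gs)
  also have "(\<Sum>k=1..n. g k k) \<le> B * real n * (C * expectation (\<lambda>\<omega>. (min \<bar>Y \<omega>\<bar> (real n))\<^sup>2))"
  proof -
    let ?E = "C * expectation (\<lambda>\<omega>. (min \<bar>Y \<omega>\<bar> (real n))\<^sup>2)"
    have "(\<Sum>k=1..n. g k k) \<le> (\<Sum>k=1..n. (b k)\<^sup>2 * ?E)"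
    proof (rule sum_mono)
      fix k assume k: "k \<in> {1..n}"
      have "c k k = expectation (\<lambda>\<omega>. W k \<omega> * W k \<omega>) - \<nu> k * \<nu> k"
        unfolding c_def using k by (intro EUU) auto
      also have "\<dots> \<le> expectation (\<lambda>\<omega>. (W k \<omega>)\<^sup>2)" by (simp add: power2_eq_square)
      also have "\<dots> \<le> ?E" by (rule EW2) (use k in auto)
      finally have "c k k \<le> ?E" .
      then show "g k k \<le> (b k)\<^sup>2 * ?E" unfolding g_def
        by (simp add: power2_eq_square mult_left_mono)
    qed
    also have "\<dots> = (\<Sum>k=1..n. (b k)\<^sup>2) * ?E" by (simp add: sum_distrib_right)
    also have "\<dots> \<le> B * real n * ?E"
    proof (rule mult_right_mono)
      show "(\<Sum>k=1..n. (b k)\<^sup>2) \<le> B * real n" by (rule Bb)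
      show "0 \<le> ?E" using C by (simp add: integral_nonneg_AE)
    qed
    finally show ?thesis .
  qed
  also have "(\<Sum>j=1..n. \<Sum>k=1..<j. g k j) \<le> (\<Sum>j=1..n. \<Sum>k=1..<j. b k * b j * H k j)"
  proof (intro sum_mono)
    fix j k assume j: "j \<in> {1..n}" and k: "k \<in> {1..<j}"
    have "c k j = expectation (\<lambda>\<omega>. W k \<omega> * W j \<omega>) - \<nu> k * \<nu> j"
      unfolding c_def using j k by (intro EUU) auto
    also have "\<dots> \<le> H k j"
      using cov[of k j] j k unfolding \<nu>_def W_def by auto
    finally show "g k j \<le> b k * b j * H k j" unfolding g_def
      using bn[of k] bn[of j] by (simp add: mult_left_mono)
  qed
  finally show ?thesis by linarith
qed

lemma cheb: assumes "0 < r"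
  shows "prob {\<omega>\<in>space M. r \<le> \<bar>T n \<omega>\<bar>} \<le> expectation (\<lambda>\<omega>. (T n \<omega>)\<^sup>2) / r\<^sup>2"
proof -
  have [measurable]: "T n \<in> borel_measurable M" by (rule Tm)
  have iT: "integrable M (\<lambda>\<omega>. (T n \<omega>)\<^sup>2)"
  proof -
    have "T n = (\<lambda>\<omega>. \<Sum>k=1..n. b k * (W k \<omega> - \<nu> k))" unfolding T_def by auto
    have "integrable M (\<lambda>\<omega>. \<Sum>k=1..n. \<Sum>j=1..n. b k * b j * ((W k \<omega> - \<nu> k) * (W j \<omega> - \<nu> j)))"
      by (auto intro!: Bochner_Integration.integrable_sum Ui)
    moreover have "(T n \<omega>)\<^sup>2 = (\<Sum>k=1..n. \<Sum>j=1..n. b k * b j * ((W k \<omega> - \<nu> k) * (W j \<omega> - \<nu> j)))" for \<omega>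
      unfolding T_def power2_eq_square sum_product by (simp add: ac_simps)
    ultimately show ?thesis by simp
  qed
  have "prob {\<omega>\<in>space M. r \<le> \<bar>T n \<omega>\<bar>} \<le> prob {\<omega>\<in>space M. r\<^sup>2 \<le> (T n \<omega>)\<^sup>2}"
  proof (rule finite_measure_mono)
    show "{\<omega>\<in>space M. r \<le> \<bar>T n \<omega>\<bar>} \<subseteq> {\<omega>\<in>space M. r\<^sup>2 \<le> (T n \<omega>)\<^sup>2}"
      using assms by (auto simp: abs_le_square_iff[symmetric])
  qed measurable
  also have "\<dots> \<le> expectation (\<lambda>\<omega>. (T n \<omega>)\<^sup>2) / r\<^sup>2"
    by (rule integral_Markov_inequality_measure[OF iT]) (use assms in auto)
  finally show ?thesis .
qed

end

lemma sum_h: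
  fixes hh :: "nat \<Rightarrow> real"
  assumes a: "1 < \<alpha>" and hn: "\<And>j. 0 \<le> hh j" and hs: "\<And>N. (\<Sum>j=1..N. hh j / (real j)\<^sup>2) \<le> K0"
  shows "(\<Sum>m<Mx. (\<Sum>j=1..nseq \<alpha> m. hh j) / (real (nseq \<alpha> m))\<^sup>2) \<le> 4 * \<alpha>\<^sup>2 / (\<alpha>\<^sup>2 - 1) * K0"
proof -
  let ?n = "nseq \<alpha>"
  let ?c = "4 * \<alpha>\<^sup>2 / (\<alpha>\<^sup>2 - 1)"
  define N where "N = (\<Sum>m<Mx. ?n m)"
  have nN: "?n m \<le> N" if "m < Mx" for m
    unfolding N_def using that by (intro member_le_sum) auto
  have "(\<Sum>m<Mx. (\<Sum>j=1..?n m. hh j) / (real (?n m))\<^sup>2) = (\<Sum>m<Mx. \<Sum>j\<in>{j. j \<in> {1..N} \<and> j \<le> ?n m}. hh j / (real (?n m))\<^sup>2)"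
  proof (rule sum.cong[OF refl])
    fix m assume "m \<in> {..<Mx}"
    then have "{j. j \<in> {1..N} \<and> j \<le> ?n m} = {1..?n m}" using nN[of m] by auto
    then show "(\<Sum>j=1..?n m. hh j) / (real (?n m))\<^sup>2 = (\<Sum>j\<in>{j. j \<in> {1..N} \<and> j \<le> ?n m}. hh j / (real (?n m))\<^sup>2)"
      by (simp add: sum_divide_distrib)
  qed
  also have "\<dots> = (\<Sum>j\<in>{1..N}. \<Sum>m\<in>{m. m \<in> {..<Mx} \<and> j \<le> ?n m}. hh j / (real (?n m))\<^sup>2)"
    by (rule sum.swap_restrict) auto
  also have "\<dots> \<le> (\<Sum>j\<in>{1..N}. hh j * (?c / (real j)\<^sup>2))"
  proof (rule sum_mono)
    fix j assume j: "j \<in> {1..N}"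
    have "(\<Sum>m\<in>{m. m \<in> {..<Mx} \<and> j \<le> ?n m}. hh j / (real (?n m))\<^sup>2) = hh j * (\<Sum>m\<in>{m\<in>{..<Mx}. real j \<le> real (?n m)}. 1 / (real (?n m))\<^sup>2)"
      by (simp add: sum_distrib_left)
    also have "\<dots> \<le> hh j * (?c / (real j)\<^sup>2)"
    proof (rule mult_left_mono)
      show "(\<Sum>m\<in>{m\<in>{..<Mx}. real j \<le> real (?n m)}. 1 / (real (?n m))\<^sup>2) \<le> ?c / (real j)\<^sup>2"
        by (rule pointwise2[OF a]) (use j in auto)
    qed (rule hn)
    finally show "(\<Sum>m\<in>{m. m \<in> {..<Mx} \<and> j \<le> ?n m}. hh j / (real (?n m))\<^sup>2) \<le> hh j * (?c / (real j)\<^sup>2)" .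
  qed
  also have "\<dots> = ?c * (\<Sum>j=1..N. hh j / (real j)\<^sup>2)"
    unfolding sum_distrib_left by (rule sum.cong) (simp_all add: field_simps)
  also have "\<dots> \<le> ?c * K0"
  proof (rule mult_left_mono)
    show "0 \<le> ?c" using a by (simp add: one_less_power)
  qed (rule hs)
  finally show ?thesis .
qed

context nnsetup begin

lemma sum_first: assumes a: "1 < \<alpha>"
  shows "(\<Sum>m<Mx. expectation (\<lambda>\<omega>. (min \<bar>Y \<omega>\<bar> (real (nseq \<alpha> m)))\<^sup>2) / real (nseq \<alpha> m))
     \<le> 4 * \<alpha> / (\<alpha> - 1) * expectation (\<lambda>\<omega>. \<bar>Y \<omega>\<bar>)"
proof -
  let ?n = "nseq \<alpha>"
  have im: "integrable M (\<lambda>\<omega>. (min \<bar>Y \<omega>\<bar> (real (?n m)))\<^sup>2 / real (?n m))" for m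
    by (rule integrable_const_bound[where B="(real (?n m))\<^sup>2 / real (?n m)"])
       (auto simp: abs_le_square_iff divide_right_mono)
  have "(\<Sum>m<Mx. expectation (\<lambda>\<omega>. (min \<bar>Y \<omega>\<bar> (real (?n m)))\<^sup>2) / real (?n m))
      = (\<Sum>m<Mx. expectation (\<lambda>\<omega>. (min \<bar>Y \<omega>\<bar> (real (?n m)))\<^sup>2 / real (?n m)))"
    by simp
  also have "\<dots> = expectation (\<lambda>\<omega>. \<Sum>m<Mx. (min \<bar>Y \<omega>\<bar> (real (?n m)))\<^sup>2 / real (?n m))"
    by (rule Bochner_Integration.integral_sum[symmetric]) (rule im)
  also have "\<dots> \<le> expectation (\<lambda>\<omega>. 4 * \<alpha> / (\<alpha> - 1) * \<bar>Y \<omega>\<bar>)"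
  proof (rule integral_mono)
    show "integrable M (\<lambda>\<omega>. \<Sum>m<Mx. (min \<bar>Y \<omega>\<bar> (real (?n m)))\<^sup>2 / real (?n m))"
      by (rule Bochner_Integration.integrable_sum) (rule im)
    show "integrable M (\<lambda>\<omega>. 4 * \<alpha> / (\<alpha> - 1) * \<bar>Y \<omega>\<bar>)" using iY by simp
    show "(\<Sum>m<Mx. (min \<bar>Y \<omega>\<bar> (real (?n m)))\<^sup>2 / real (?n m)) \<le> 4 * \<alpha> / (\<alpha> - 1) * \<bar>Y \<omega>\<bar>" for \<omega>
      by (rule pointwise1[OF a]) auto
  qed
  also have "\<dots> = 4 * \<alpha> / (\<alpha> - 1) * expectation (\<lambda>\<omega>. \<bar>Y \<omega>\<bar>)" by simp
  finally show ?thesis .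
qed

lemma subseq_eps: assumes a: "1 < \<alpha>" and e: "0 < \<epsilon>"
  shows "AE \<omega> in M. eventually (\<lambda>m. \<bar>T (nseq \<alpha> m) \<omega>\<bar> < \<epsilon> * real (nseq \<alpha> m)) sequentially"
proof -
  let ?n = "nseq \<alpha>"
  have nb: "1 \<le> ?n m" for m using nseq_bounds(1)[of \<alpha> m] a by simp
  define A where "A m = {\<omega>\<in>space M. \<epsilon> * real (?n m) \<le> \<bar>T (?n m) \<omega>\<bar>}" for m
  have Am[measurable]: "A m \<in> events" for m
    unfolding A_def using Tm[of "?n m"] by measurable
  define hh where "hh j = (\<Sum>k=1..<j. b k * b j * H k j)" for j
  have hhn: "0 \<le> hh j" for j unfolding hh_def using bn Hn by (auto intro!: sum_nonneg)
  have hhs: "(\<Sum>j=1..N. hh j / (real j)\<^sup>2) \<le> K0" for N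
    using Hsum[of N] unfolding hh_def by (simp add: sum_divide_distrib)
  let ?EY = "expectation (\<lambda>\<omega>. \<bar>Y \<omega>\<bar>)"
  let ?c1 = "4 * \<alpha> / (\<alpha> - 1)"
  let ?c2 = "4 * \<alpha>\<^sup>2 / (\<alpha>\<^sup>2 - 1)"
  have "summable (\<lambda>m. measure M (A m))"
  proof (rule summableI_nonneg_bounded[where x="(B * C * (?c1 * ?EY) + 2 * (?c2 * K0)) / \<epsilon>\<^sup>2"])
    show "0 \<le> measure M (A m)" for m by simp
    fix Mx
    have "(\<Sum>m<Mx. measure M (A m)) \<le> (\<Sum>m<Mx. (B * C * (expectation (\<lambda>\<omega>. (min \<bar>Y \<omega>\<bar> (real (?n m)))\<^sup>2) / real (?n m))
          + 2 * ((\<Sum>j=1..?n m. hh j) / (real (?n m))\<^sup>2)) / \<epsilon>\<^sup>2)"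
    proof (rule sum_mono)
      fix m
      have pos: "0 < \<epsilon> * real (?n m)" using e nb[of m] by simp
      have "measure M (A m) \<le> expectation (\<lambda>\<omega>. (T (?n m) \<omega>)\<^sup>2) / (\<epsilon> * real (?n m))\<^sup>2"
        unfolding A_def by (rule cheb[OF pos])
      also have "\<dots> \<le> (B * real (?n m) * (C * expectation (\<lambda>\<omega>. (min \<bar>Y \<omega>\<bar> (real (?n m)))\<^sup>2)) + 2 * (\<Sum>j=1..?n m. hh j)) / (\<epsilon> * real (?n m))\<^sup>2"
        using ET2[of "?n m"] pos unfolding hh_def by (simp add: divide_right_mono)
      also have "\<dots> = (B * C * (expectation (\<lambda>\<omega>. (min \<bar>Y \<omega>\<bar> (real (?n m)))\<^sup>2) / real (?n m))
          + 2 * ((\<Sum>j=1..?n m. hh j) / (real (?n m))\<^sup>2)) / \<epsilon>\<^sup>2"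
        using pos nb[of m] e by (simp add: field_simps power2_eq_square)
      finally show "measure M (A m) \<le> (B * C * (expectation (\<lambda>\<omega>. (min \<bar>Y \<omega>\<bar> (real (?n m)))\<^sup>2) / real (?n m))
          + 2 * ((\<Sum>j=1..?n m. hh j) / (real (?n m))\<^sup>2)) / \<epsilon>\<^sup>2" .
    qed
    also have "\<dots> = (B * C * (\<Sum>m<Mx. expectation (\<lambda>\<omega>. (min \<bar>Y \<omega>\<bar> (real (?n m)))\<^sup>2) / real (?n m))
          + 2 * (\<Sum>m<Mx. (\<Sum>j=1..?n m. hh j) / (real (?n m))\<^sup>2)) / \<epsilon>\<^sup>2"
      by (simp add: sum_divide_distrib[symmetric] sum.distrib sum_distrib_left)
    also have "\<dots> \<le> (B * C * (?c1 * ?EY) + 2 * (?c2 * K0)) / \<epsilon>\<^sup>2"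
    proof (rule divide_right_mono)
      have "B * C * (\<Sum>m<Mx. expectation (\<lambda>\<omega>. (min \<bar>Y \<omega>\<bar> (real (?n m)))\<^sup>2) / real (?n m)) \<le> B * C * (?c1 * ?EY)"
        by (rule mult_left_mono[OF sum_first[OF a]]) (use B_nn C in simp)
      moreover have "(\<Sum>m<Mx. (\<Sum>j=1..?n m. hh j) / (real (?n m))\<^sup>2) \<le> ?c2 * K0"
        by (rule sum_h[OF a hhn hhs])
      ultimately show "B * C * (\<Sum>m<Mx. expectation (\<lambda>\<omega>. (min \<bar>Y \<omega>\<bar> (real (?n m)))\<^sup>2) / real (?n m))
          + 2 * (\<Sum>m<Mx. (\<Sum>j=1..?n m. hh j) / (real (?n m))\<^sup>2) \<le> B * C * (?c1 * ?EY) + 2 * (?c2 * K0)"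
        by linarith
    qed simp
    finally show "(\<Sum>m<Mx. measure M (A m)) \<le> (B * C * (?c1 * ?EY) + 2 * (?c2 * K0)) / \<epsilon>\<^sup>2" .
  qed
  then have "AE \<omega> in M. eventually (\<lambda>m. \<omega> \<in> space M - A m) sequentially"
    by (intro borel_cantelli_AE1) (auto simp: emeasure_eq_measure)
  then show ?thesis
  proof (rule AE_mp[OF _ AE_I2], intro impI)
    fix \<omega> assume \<omega>: "\<omega> \<in> space M" and ev: "eventually (\<lambda>m. \<omega> \<in> space M - A m) sequentially"
    show "eventually (\<lambda>m. \<bar>T (?n m) \<omega>\<bar> < \<epsilon> * real (?n m)) sequentially"
      using ev by eventually_elim (use \<omega> in \<open>auto simp: A_def\<close>)
  qed
qed

lemma subseq: assumes a: "1 < \<alpha>"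
  shows "AE \<omega> in M. (\<lambda>m. T (nseq \<alpha> m) \<omega> / real (nseq \<alpha> m)) \<longlonglongrightarrow> 0"
proof -
  let ?n = "nseq \<alpha>"
  have nb: "1 \<le> ?n m" for m using nseq_bounds(1)[of \<alpha> m] a by simp
  have "\<forall>q::nat. AE \<omega> in M. eventually (\<lambda>m. \<bar>T (?n m) \<omega>\<bar> < (1 / real (Suc q)) * real (?n m)) sequentially"
  proof
    fix q :: nat
    show "AE \<omega> in M. eventually (\<lambda>m. \<bar>T (?n m) \<omega>\<bar> < (1 / real (Suc q)) * real (?n m)) sequentially"
      by (rule subseq_eps[OF a]) simp
  qed
  then have "AE \<omega> in M. \<forall>q::nat. eventually (\<lambda>m. \<bar>T (?n m) \<omega>\<bar> < (1 / real (Suc q)) * real (?n m)) sequentially"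
    by (simp add: AE_all_countable)
  then show ?thesis
  proof (rule AE_mp[OF _ AE_I2], intro impI)
    fix \<omega> assume all: "\<forall>q::nat. eventually (\<lambda>m. \<bar>T (?n m) \<omega>\<bar> < (1 / real (Suc q)) * real (?n m)) sequentially"
    show "(\<lambda>m. T (?n m) \<omega> / real (?n m)) \<longlonglongrightarrow> 0"
    proof (rule LIMSEQ_I)
      fix r :: real assume r: "0 < r"
      obtain q :: nat where q: "1 / real (Suc q) < r"
        using reals_Archimedean[OF r] by (auto simp: inverse_eq_divide)
      have "eventually (\<lambda>m. norm (T (?n m) \<omega> / real (?n m) - 0) < r) sequentially"
        using all[rule_format, of q]
      proof eventually_elim
        case (elim m)
        have p: "0 < real (?n m)" using nb[of m] by simp
        have "\<bar>T (?n m) \<omega>\<bar> / real (?n m) < 1 / real (Suc q)"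
          using elim p by (simp add: pos_divide_less_eq)
        then show ?case using q p by (simp add: abs_divide)
      qed
      then show "\<exists>no. \<forall>m\<ge>no. norm (T (?n m) \<omega> / real (?n m) - 0) < r"
        by (simp add: eventually_sequentially)
    qed
  qed
qed

end

lemma incr_bound:
  fixes bb nu :: "nat \<Rightarrow> real" and L B lam :: real
  assumes bn: "\<And>k. 0 \<le> bb k" and nu: "\<And>k. 1 \<le> k \<Longrightarrow> 0 \<le> nu k \<and> nu k \<le> L"
    and Bb: "\<And>n. (\<Sum>k=1..n. (bb k)\<^sup>2) \<le> B * real n" and lam: "0 < lam" and n12: "n1 \<le> n2"
  shows "(\<Sum>k=1..n2. bb k * nu k) - (\<Sum>k=1..n1. bb k * nu k) \<le> L * (lam * (real n2 - real n1) / 2 + B * real n2 / (2 * lam))"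
proof -
  have e: "{1..n2} = {1..n1} \<union> {n1<..n2}" using n12 by auto
  have "(\<Sum>k=1..n2. bb k * nu k) = (\<Sum>k=1..n1. bb k * nu k) + (\<Sum>k\<in>{n1<..n2}. bb k * nu k)"
    unfolding e by (rule sum.union_disjoint) auto
  moreover have "(\<Sum>k\<in>{n1<..n2}. bb k * nu k) \<le> L * (lam * (real n2 - real n1) / 2 + B * real n2 / (2 * lam))"
  proof -
    have L: "0 \<le> L" using nu[of 1] by simp
    have "(\<Sum>k\<in>{n1<..n2}. bb k * nu k) \<le> (\<Sum>k\<in>{n1<..n2}. L * (lam / 2 + (bb k)\<^sup>2 / (2 * lam)))"
    proof (rule sum_mono)
      fix k assume k: "k \<in> {n1<..n2}"
      have "bb k * nu k \<le> bb k * L" using nu[of k] k bn[of k] by (simp add: mult_left_mono)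
      also have "bb k \<le> lam / 2 + (bb k)\<^sup>2 / (2 * lam)"
      proof -
        have "0 \<le> (bb k - lam)\<^sup>2" by simp
        then have "2 * lam * bb k \<le> lam\<^sup>2 + (bb k)\<^sup>2" by (simp add: power2_eq_square algebra_simps)
        then show ?thesis using lam by (simp add: field_simps power2_eq_square)
      qed
      then have "bb k * L \<le> L * (lam / 2 + (bb k)\<^sup>2 / (2 * lam))" using L by (simp add: mult.commute mult_left_mono)
      finally show "bb k * nu k \<le> L * (lam / 2 + (bb k)\<^sup>2 / (2 * lam))" .
    qed
    also have "\<dots> = L * (lam / 2 * real (card {n1<..n2}) + (\<Sum>k\<in>{n1<..n2}. (bb k)\<^sup>2) / (2 * lam))"
      by (simp add: sum_distrib_left[symmetric] sum.distrib sum_divide_distrib[symmetric])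
    also have "\<dots> \<le> L * (lam * (real n2 - real n1) / 2 + B * real n2 / (2 * lam))"
    proof (rule mult_left_mono[OF _ L])
      have "(\<Sum>k\<in>{n1<..n2}. (bb k)\<^sup>2) \<le> (\<Sum>k=1..n2. (bb k)\<^sup>2)"
        by (rule sum_mono2) auto
      also have "\<dots> \<le> B * real n2" by (rule Bb)
      finally have "(\<Sum>k\<in>{n1<..n2}. (bb k)\<^sup>2) / (2 * lam) \<le> B * real n2 / (2 * lam)"
        using lam by (simp add: divide_right_mono)
      moreover have "lam / 2 * real (card {n1<..n2}) = lam * (real n2 - real n1) / 2"
        using n12 by (simp add: of_nat_diff)
      ultimately show "lam / 2 * real (card {n1<..n2}) + (\<Sum>k\<in>{n1<..n2}. (bb k)\<^sup>2) / (2 * lam)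
          \<le> lam * (real n2 - real n1) / 2 + B * real n2 / (2 * lam)" by linarith
    qed
    finally show ?thesis .
  qed
  ultimately show ?thesis by simp
qed

lemma nseq_mono: "1 \<le> \<alpha> \<Longrightarrow> nseq \<alpha> m \<le> nseq \<alpha> (Suc m)"
  unfolding nseq_def by (intro nat_mono floor_mono) (simp add: mult_le_cancel_right1 one_le_power)

lemma nseq_large: assumes "1 < \<alpha>" shows "eventually (\<lambda>m. x \<le> real (nseq \<alpha> m)) sequentially"
proof -
  obtain N where N: "2 * x < \<alpha> ^ N" using real_arch_pow[OF assms] by blast
  show ?thesis unfolding eventually_sequentially
  proof (intro exI[of _ N] allI impI)
    fix m assume "N \<le> m"
    then have "\<alpha> ^ N \<le> \<alpha> ^ m" using assms by (simp add: power_increasing)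
    moreover have "\<alpha> ^ m \<le> 2 * real (nseq \<alpha> m)" using nseq_bounds(3)[of \<alpha> m] assms by simp
    ultimately show "x \<le> real (nseq \<alpha> m)" using N by linarith
  qed
qed

lemma incr_nseq:
  fixes bb nu :: "nat \<Rightarrow> real" and L B :: real and p :: nat
  assumes bn: "\<And>k. 0 \<le> bb k" and nu: "\<And>k. 1 \<le> k \<Longrightarrow> 0 \<le> nu k \<and> nu k \<le> L"
    and Bb: "\<And>n. (\<Sum>k=1..n. (bb k)\<^sup>2) \<le> B * real n" and B: "0 \<le> B"
  defines "\<alpha> \<equiv> 1 + 1 / (real (Suc p))\<^sup>2"
  shows "eventually (\<lambda>m. (\<Sum>k=1..nseq \<alpha> (Suc m). bb k * nu k) - (\<Sum>k=1..nseq \<alpha> m. bb k * nu k)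
      \<le> (L * (2 + 2 * B) / real (Suc p)) * real (nseq \<alpha> m)) sequentially"
proof -
  define q where "q = real (Suc p)"
  have q: "1 \<le> q" unfolding q_def by simp
  have a: "1 < \<alpha>" unfolding \<alpha>_def by simp
  have a2: "\<alpha> \<le> 2" unfolding \<alpha>_def by (simp add: power_le_one_iff)
  have L: "0 \<le> L" using nu[of 1] by simp
  have "eventually (\<lambda>m. q\<^sup>2 \<le> real (nseq \<alpha> m)) sequentially" by (rule nseq_large[OF a])
  then show ?thesis
  proof eventually_elim
    case (elim m)
    let ?n1 = "nseq \<alpha> m" and ?n2 = "nseq \<alpha> (Suc m)"
    have n12: "?n1 \<le> ?n2" using nseq_mono a by simp
    have "(\<Sum>k=1..?n2. bb k * nu k) - (\<Sum>k=1..?n1. bb k * nu k) \<le> L * (q * (real ?n2 - real ?n1) / 2 + B * real ?n2 / (2 * q))"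
      by (rule incr_bound[OF bn nu Bb _ n12]) (use q in auto)
    also have "\<dots> \<le> L * ((2 + 2 * B) / q * real ?n1)"
    proof (rule mult_left_mono[OF _ L])
      have f1: "real ?n1 > \<alpha> ^ m - 1" unfolding nseq_def using nseq_bounds(1)[of \<alpha> m] a
        by (simp add: one_le_power)
      have f2: "real ?n2 \<le> \<alpha> * \<alpha> ^ m" using nseq_bounds(2)[of \<alpha> "Suc m"] a by simp
      have am: "1 \<le> \<alpha> ^ m" using a by (simp add: one_le_power)
      have d1: "real ?n2 - real ?n1 \<le> (\<alpha> - 1) * \<alpha> ^ m + 1" using f1 f2 by (simp add: algebra_simps)
      have "(\<alpha> - 1) * \<alpha> ^ m \<le> (\<alpha> - 1) * (real ?n1 + 1)"
        using f1 a by (intro mult_left_mono) auto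
      then have d2: "real ?n2 - real ?n1 \<le> (real ?n1 + 1) / q\<^sup>2 + 1"
        using d1 unfolding \<alpha>_def q_def by simp
      have n1big: "q\<^sup>2 \<le> real ?n1" using elim .
      have "q * (real ?n2 - real ?n1) / 2 \<le> q * ((real ?n1 + 1) / q\<^sup>2 + 1) / 2"
        using d2 q by (simp add: divide_right_mono mult_left_mono)
      also have "\<dots> = (real ?n1 + 1) / (2 * q) + q / 2" using q by (simp add: field_simps power2_eq_square)
      also have "\<dots> \<le> real ?n1 / q + real ?n1 / (2 * q)"
      proof -
        have "(real ?n1 + 1) / (2 * q) \<le> real ?n1 / q"
        proof -
          have "real ?n1 + 1 \<le> 2 * real ?n1" using nseq_bounds(1)[of \<alpha> m] a by simp
          then show ?thesis using q by (simp add: field_simps)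
        qed
        moreover have "q / 2 \<le> real ?n1 / (2 * q)" using n1big q by (simp add: field_simps power2_eq_square)
        ultimately show ?thesis by linarith
      qed
      finally have t1: "q * (real ?n2 - real ?n1) / 2 \<le> real ?n1 / q + real ?n1 / (2 * q)" .
      have "real ?n2 \<le> 2 * (real ?n1 + 1)"
      proof -
        have "\<alpha> * \<alpha> ^ m \<le> 2 * \<alpha> ^ m" using a2 am by (intro mult_right_mono) auto
        moreover have "2 * \<alpha> ^ m \<le> 2 * (real ?n1 + 1)" using f1 by (smt (verit))
        ultimately have "\<alpha> * \<alpha> ^ m \<le> 2 * (real ?n1 + 1)" by (rule order.trans)
        then show ?thesis using f2 by linarith
      qed
      also have "\<dots> \<le> 4 * real ?n1" using nseq_bounds(1)[of \<alpha> m] a by simp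
      finally have "B * real ?n2 \<le> B * (4 * real ?n1)" using B by (rule mult_left_mono)
      then have "B * real ?n2 / (2 * q) \<le> B * (4 * real ?n1) / (2 * q)"
        using q by (intro divide_right_mono) auto
      also have "\<dots> = 2 * B * real ?n1 / q" using q by (simp add: field_simps)
      finally have t2: "B * real ?n2 / (2 * q) \<le> 2 * B * real ?n1 / q" .
      have "real ?n1 / q + real ?n1 / (2 * q) + 2 * B * real ?n1 / q \<le> (2 + 2 * B) / q * real ?n1"
        using q by (simp add: field_simps)
      then show "q * (real ?n2 - real ?n1) / 2 + B * real ?n2 / (2 * q) \<le> (2 + 2 * B) / q * real ?n1"
        using t1 t2 by linarith
    qed
    finally show ?case unfolding q_def by (simp add: mult.assoc)
  qed
qed

context nnsetup begin

lemma Tlim: "AE \<omega> in M. (\<lambda>n. T n \<omega> / real n) \<longlonglongrightarrow> 0"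
proof -
  define \<alpha> where "\<alpha> p = 1 + 1 / (real (Suc p))\<^sup>2" for p
  have a: "1 < \<alpha> p" for p unfolding \<alpha>_def by simp
  have a2: "\<alpha> p \<le> 2" for p unfolding \<alpha>_def by (simp add: power_le_one_iff)
  have "AE \<omega> in M. \<forall>p::nat. (\<lambda>m. T (nseq (\<alpha> p) m) \<omega> / real (nseq (\<alpha> p) m)) \<longlonglongrightarrow> 0"
    unfolding AE_all_countable using subseq[OF a] by blast
  then show ?thesis
  proof (rule AE_mp[OF _ AE_I2], intro impI)
    fix \<omega> assume \<omega>: "\<omega> \<in> space M" and all: "\<forall>p::nat. (\<lambda>m. T (nseq (\<alpha> p) m) \<omega> / real (nseq (\<alpha> p) m)) \<longlonglongrightarrow> 0"
    define S where "S n = (\<Sum>k=1..n. b k * W k \<omega>)" for n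
    define E where "E n = (\<Sum>k=1..n. b k * \<nu> k)" for n
    have TSE: "T n \<omega> = S n - E n" for n
      unfolding T_def S_def E_def by (simp add: sum_subtractf[symmetric] right_diff_distrib)
    have Smono: "S n \<le> S n'" if "n \<le> n'" for n n'
      unfolding S_def by (rule sum_mono2) (use that Wb[OF _ \<omega>] bn in auto)
    have Emono: "E n \<le> E n'" if "n \<le> n'" for n n'
      unfolding E_def by (rule sum_mono2) (use that \<nu>_le bn in auto)
    show "(\<lambda>n. T n \<omega> / real n) \<longlonglongrightarrow> 0"
    proof (rule LIMSEQ_I)
      fix r :: real assume r: "0 < r"
      define D where "D p = L * (2 + 2 * B) / real (Suc p)" for p
      have LB: "0 \<le> L * (2 + 2 * B)" using L_nn B_nn by simp
      obtain p :: nat where p0: "2 * (L * (2 + 2 * B)) / r < real p"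
        using reals_Archimedean2 by blast
      then have p: "2 * (L * (2 + 2 * B)) / r < real (Suc p)" by simp
      have Dp: "D p < r / 2"
      proof -
        have "2 * (L * (2 + 2 * B)) < r * real (Suc p)" using p r by (simp add: field_simps)
        then show ?thesis unfolding D_def by (simp add: field_simps)
      qed
      have inc: "eventually (\<lambda>m. E (nseq (\<alpha> p) (Suc m)) - E (nseq (\<alpha> p) m) \<le> D p * real (nseq (\<alpha> p) m)) sequentially"
        unfolding E_def D_def \<alpha>_def
      proof (rule incr_nseq[OF bn _ Bb B_nn])
        fix k :: nat assume k: "1 \<le> k"
        show "0 \<le> \<nu> k \<and> \<nu> k \<le> L" using \<nu>_le[OF k] \<mu>L[OF k] by simp
      qed
      have lim: "(\<lambda>m. (S (nseq (\<alpha> p) m) - E (nseq (\<alpha> p) m)) / real (nseq (\<alpha> p) m)) \<longlonglongrightarrow> 0"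
        using all[rule_format, of p] unfolding TSE .
      have ev: "eventually (\<lambda>n. \<bar>S n - E n\<bar> / real n \<le> D p + (1 + 2 * \<alpha> p) * (r / 20)) sequentially"
        by (rule interp[OF a Smono Emono lim inc]) (use r in auto)
      have lt: "D p + (1 + 2 * \<alpha> p) * (r / 20) < r"
      proof -
        have "(1 + 2 * \<alpha> p) * (r / 20) \<le> 5 * (r / 20)" using a2[of p] r by (intro mult_right_mono) auto
        then show ?thesis using Dp r by linarith
      qed
      from ev have "eventually (\<lambda>n. norm (T n \<omega> / real n - 0) < r) sequentially"
        by eventually_elim (use lt in \<open>simp add: TSE abs_divide\<close>)
      then show "\<exists>no. \<forall>n\<ge>no. norm (T n \<omega> / real n - 0) < r" by (simp add: eventually_sequentially)
    qed
  qed
qed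

lemma slln_nn: "AE \<omega> in M. (\<lambda>n. (\<Sum>k=1..n. b k * (Z k \<omega> - \<mu> k)) / real n) \<longlonglongrightarrow> 0"
  using part1 Tlim
proof (eventually_elim)
  case (elim \<omega>)
  have eq: "(\<Sum>k=1..n. b k * (Z k \<omega> - \<mu> k)) / real n =
     (\<Sum>k=1..n. b k * (Z k \<omega> - W k \<omega>)) / real n + T n \<omega> / real n - (\<Sum>k=1..n. b k * (\<mu> k - \<nu> k)) / real n" for n
  proof -
    have "(\<Sum>k=1..n. b k * (Z k \<omega> - \<mu> k)) = (\<Sum>k=1..n. b k * (Z k \<omega> - W k \<omega>) + b k * (W k \<omega> - \<nu> k) - b k * (\<mu> k - \<nu> k))"
      by (rule sum.cong) (auto simp: algebra_simps)
    also have "\<dots> = (\<Sum>k=1..n. b k * (Z k \<omega> - W k \<omega>)) + T n \<omega> - (\<Sum>k=1..n. b k * (\<mu> k - \<nu> k))"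
      unfolding T_def by (simp add: sum.distrib sum_subtractf)
    finally show ?thesis by (simp add: add_divide_distrib diff_divide_distrib)
  qed
  have "(\<lambda>n. (\<Sum>k=1..n. b k * (Z k \<omega> - W k \<omega>)) / real n + T n \<omega> / real n - (\<Sum>k=1..n. b k * (\<mu> k - \<nu> k)) / real n) \<longlonglongrightarrow> 0 + 0 - 0"
    by (intro tendsto_intros elim part2)
  then show ?case unfolding eq by simp
qed

end

context prob_space begin

definition cv :: "('a \<Rightarrow> real) \<Rightarrow> ('a \<Rightarrow> real) \<Rightarrow> real" where
  "cv U V = expectation (\<lambda>\<omega>. U \<omega> * V \<omega>) - expectation U * expectation V"

lemma bnd_int:
  fixes U :: "'a \<Rightarrow> real"
  assumes "U \<in> borel_measurable M" "\<And>\<omega>. \<omega> \<in> space M \<Longrightarrow> \<bar>U \<omega>\<bar> \<le> K"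
  shows "integrable M U"
  by (rule integrable_const_bound[where B=K]) (use assms in auto)

lemma bnd_int2:
  fixes U V :: "'a \<Rightarrow> real"
  assumes "U \<in> borel_measurable M" "\<And>\<omega>. \<omega> \<in> space M \<Longrightarrow> \<bar>U \<omega>\<bar> \<le> K"
    "V \<in> borel_measurable M" "\<And>\<omega>. \<omega> \<in> space M \<Longrightarrow> \<bar>V \<omega>\<bar> \<le> K"
  shows "integrable M (\<lambda>\<omega>. U \<omega> * V \<omega>)"
proof (rule integrable_const_bound[where B="K * K"])
  show "AE x in M. norm (U x * V x) \<le> K * K"
    using assms by (auto simp: abs_mult intro!: mult_mono')
qed (use assms in measurable)

lemma cv_shift:
  fixes U V :: "'a \<Rightarrow> real"
  assumes "integrable M U" "integrable M V" "integrable M (\<lambda>\<omega>. U \<omega> * V \<omega>)"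
  shows "cv (\<lambda>\<omega>. U \<omega> + c) (\<lambda>\<omega>. V \<omega> + d) = cv U V"
proof -
  have e: "(\<lambda>\<omega>. (U \<omega> + c) * (V \<omega> + d)) = (\<lambda>\<omega>. U \<omega> * V \<omega> + d * U \<omega> + c * V \<omega> + c * d)"
    by (auto simp: fun_eq_iff algebra_simps)
  show ?thesis unfolding cv_def e using assms by (simp add: prob_space algebra_simps)
qed

lemma cv_expand:
  fixes U1 U2 U3 V1 V2 V3 :: "'a \<Rightarrow> real"
  assumes m: "U1 \<in> borel_measurable M" "U2 \<in> borel_measurable M" "U3 \<in> borel_measurable M"
     "V1 \<in> borel_measurable M" "V2 \<in> borel_measurable M" "V3 \<in> borel_measurable M"
    and b: "\<And>\<omega>. \<omega> \<in> space M \<Longrightarrow> \<bar>U1 \<omega>\<bar> \<le> K \<and> \<bar>U2 \<omega>\<bar> \<le> K \<and> \<bar>U3 \<omega>\<bar> \<le> K \<and> \<bar>V1 \<omega>\<bar> \<le> K \<and> \<bar>V2 \<omega>\<bar> \<le> K \<and> \<bar>V3 \<omega>\<bar> \<le> K"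
  shows "cv (\<lambda>\<omega>. U1 \<omega> + U2 \<omega> + U3 \<omega>) (\<lambda>\<omega>. V1 \<omega> + V2 \<omega> + V3 \<omega>) =
    cv U1 V1 + cv U1 V2 + cv U1 V3 + cv U2 V1 + cv U2 V2 + cv U2 V3 + cv U3 V1 + cv U3 V2 + cv U3 V3"
proof -
  have iU: "integrable M U1" "integrable M U2" "integrable M U3"
    "integrable M V1" "integrable M V2" "integrable M V3"
    using m b by (auto intro!: bnd_int[where K=K])
  have iP: "integrable M (\<lambda>\<omega>. U1 \<omega> * V1 \<omega>)" "integrable M (\<lambda>\<omega>. U1 \<omega> * V2 \<omega>)" "integrable M (\<lambda>\<omega>. U1 \<omega> * V3 \<omega>)"
    "integrable M (\<lambda>\<omega>. U2 \<omega> * V1 \<omega>)" "integrable M (\<lambda>\<omega>. U2 \<omega> * V2 \<omega>)" "integrable M (\<lambda>\<omega>. U2 \<omega> * V3 \<omega>)"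
    "integrable M (\<lambda>\<omega>. U3 \<omega> * V1 \<omega>)" "integrable M (\<lambda>\<omega>. U3 \<omega> * V2 \<omega>)" "integrable M (\<lambda>\<omega>. U3 \<omega> * V3 \<omega>)"
    using m b by (auto intro!: bnd_int2[where K=K])
  have e: "(\<lambda>\<omega>. (U1 \<omega> + U2 \<omega> + U3 \<omega>) * (V1 \<omega> + V2 \<omega> + V3 \<omega>)) =
    (\<lambda>\<omega>. U1 \<omega> * V1 \<omega> + U1 \<omega> * V2 \<omega> + U1 \<omega> * V3 \<omega> + U2 \<omega> * V1 \<omega> + U2 \<omega> * V2 \<omega> + U2 \<omega> * V3 \<omega>
       + U3 \<omega> * V1 \<omega> + U3 \<omega> * V2 \<omega> + U3 \<omega> * V3 \<omega>)"
    by (auto simp: fun_eq_iff algebra_simps)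
  have E1: "expectation (\<lambda>\<omega>. U1 \<omega> * V1 \<omega> + U1 \<omega> * V2 \<omega> + U1 \<omega> * V3 \<omega> + U2 \<omega> * V1 \<omega> + U2 \<omega> * V2 \<omega> + U2 \<omega> * V3 \<omega>
       + U3 \<omega> * V1 \<omega> + U3 \<omega> * V2 \<omega> + U3 \<omega> * V3 \<omega>) =
     expectation (\<lambda>\<omega>. U1 \<omega> * V1 \<omega>) + expectation (\<lambda>\<omega>. U1 \<omega> * V2 \<omega>) + expectation (\<lambda>\<omega>. U1 \<omega> * V3 \<omega>)
     + expectation (\<lambda>\<omega>. U2 \<omega> * V1 \<omega>) + expectation (\<lambda>\<omega>. U2 \<omega> * V2 \<omega>) + expectation (\<lambda>\<omega>. U2 \<omega> * V3 \<omega>)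
     + expectation (\<lambda>\<omega>. U3 \<omega> * V1 \<omega>) + expectation (\<lambda>\<omega>. U3 \<omega> * V2 \<omega>) + expectation (\<lambda>\<omega>. U3 \<omega> * V3 \<omega>)"
    using iP by (simp only: Bochner_Integration.integral_add Bochner_Integration.integrable_add)
  have E2: "expectation (\<lambda>\<omega>. U1 \<omega> + U2 \<omega> + U3 \<omega>) = expectation U1 + expectation U2 + expectation U3"
    using iU by (simp only: Bochner_Integration.integral_add Bochner_Integration.integrable_add)
  have E3: "expectation (\<lambda>\<omega>. V1 \<omega> + V2 \<omega> + V3 \<omega>) = expectation V1 + expectation V2 + expectation V3"
    using iU by (simp only: Bochner_Integration.integral_add Bochner_Integration.integrable_add)
  show ?thesis unfolding cv_def e E1 E2 E3 by (simp only: distrib_left distrib_right)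
qed

lemma cv_dom:
  fixes X1 X2 :: "'a \<Rightarrow> real"
  assumes [measurable]: "X1 \<in> borel_measurable M" "X2 \<in> borel_measurable M"
    and pq: "\<And>x y. prob {\<omega>\<in>space M. X1 \<omega> \<le> x \<and> X2 \<omega> \<le> y} - prob {\<omega>\<in>space M. X1 \<omega> \<le> x} * prob {\<omega>\<in>space M. X2 \<omega> \<le> y} \<ge> 0"
    and o: "a1 \<le> b1" "a2 \<le> b2" "a3 \<le> b3" "c1 \<le> d1" "c2 \<le> d2" "c3 \<le> d3"
  shows "cv (\<lambda>\<omega>. clip a1 b1 (X1 \<omega>)) (\<lambda>\<omega>. clip c1 d1 (X2 \<omega>)) \<le>
    cv (\<lambda>\<omega>. clip a1 b1 (X1 \<omega>) + clip a2 b2 (X1 \<omega>) + clip a3 b3 (X1 \<omega>))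
       (\<lambda>\<omega>. clip c1 d1 (X2 \<omega>) + clip c2 d2 (X2 \<omega>) + clip c3 d3 (X2 \<omega>))"
proof -
  define K where "K = \<bar>a1\<bar> + \<bar>b1\<bar> + \<bar>a2\<bar> + \<bar>b2\<bar> + \<bar>a3\<bar> + \<bar>b3\<bar> + \<bar>c1\<bar> + \<bar>d1\<bar> + \<bar>c2\<bar> + \<bar>d2\<bar> + \<bar>c3\<bar> + \<bar>d3\<bar>"
  have cb: "\<bar>clip a b x\<bar> \<le> K" if "a \<le> b" "\<bar>a\<bar> \<le> K" "\<bar>b\<bar> \<le> K" for a b x
    using clip_bound[OF that(1), of x] that(2,3) by linarith
  have Kb: "\<bar>a1\<bar> \<le> K" "\<bar>b1\<bar> \<le> K" "\<bar>a2\<bar> \<le> K" "\<bar>b2\<bar> \<le> K" "\<bar>a3\<bar> \<le> K" "\<bar>b3\<bar> \<le> K"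
    "\<bar>c1\<bar> \<le> K" "\<bar>d1\<bar> \<le> K" "\<bar>c2\<bar> \<le> K" "\<bar>d2\<bar> \<le> K" "\<bar>c3\<bar> \<le> K" "\<bar>d3\<bar> \<le> K"
    unfolding K_def using abs_ge_zero[of a1] abs_ge_zero[of b1] abs_ge_zero[of a2] abs_ge_zero[of b2]
      abs_ge_zero[of a3] abs_ge_zero[of b3] abs_ge_zero[of c1] abs_ge_zero[of d1] abs_ge_zero[of c2]
      abs_ge_zero[of d2] abs_ge_zero[of c3] abs_ge_zero[of d3] by linarith+
  have nn: "0 \<le> cv (\<lambda>\<omega>. clip a b (X1 \<omega>)) (\<lambda>\<omega>. clip c d (X2 \<omega>))" if "a \<le> b" "c \<le> d" for a b c d
    using pqd_clip_cov[OF assms(1,2) pq that] unfolding cv_def by simp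
  have "cv (\<lambda>\<omega>. clip a1 b1 (X1 \<omega>) + clip a2 b2 (X1 \<omega>) + clip a3 b3 (X1 \<omega>))
       (\<lambda>\<omega>. clip c1 d1 (X2 \<omega>) + clip c2 d2 (X2 \<omega>) + clip c3 d3 (X2 \<omega>)) =
     cv (\<lambda>\<omega>. clip a1 b1 (X1 \<omega>)) (\<lambda>\<omega>. clip c1 d1 (X2 \<omega>)) + cv (\<lambda>\<omega>. clip a1 b1 (X1 \<omega>)) (\<lambda>\<omega>. clip c2 d2 (X2 \<omega>))
     + cv (\<lambda>\<omega>. clip a1 b1 (X1 \<omega>)) (\<lambda>\<omega>. clip c3 d3 (X2 \<omega>)) + cv (\<lambda>\<omega>. clip a2 b2 (X1 \<omega>)) (\<lambda>\<omega>. clip c1 d1 (X2 \<omega>))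
     + cv (\<lambda>\<omega>. clip a2 b2 (X1 \<omega>)) (\<lambda>\<omega>. clip c2 d2 (X2 \<omega>)) + cv (\<lambda>\<omega>. clip a2 b2 (X1 \<omega>)) (\<lambda>\<omega>. clip c3 d3 (X2 \<omega>))
     + cv (\<lambda>\<omega>. clip a3 b3 (X1 \<omega>)) (\<lambda>\<omega>. clip c1 d1 (X2 \<omega>)) + cv (\<lambda>\<omega>. clip a3 b3 (X1 \<omega>)) (\<lambda>\<omega>. clip c2 d2 (X2 \<omega>))
     + cv (\<lambda>\<omega>. clip a3 b3 (X1 \<omega>)) (\<lambda>\<omega>. clip c3 d3 (X2 \<omega>))"
    by (rule cv_expand[where K=K]) (use o Kb in \<open>simp_all add: cb\<close>)
  moreover note nn[OF o(1) o(5)] nn[OF o(1) o(6)] nn[OF o(2) o(4)] nn[OF o(2) o(5)] nn[OF o(2) o(6)]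
    nn[OF o(3) o(4)] nn[OF o(3) o(5)] nn[OF o(3) o(6)]
  ultimately show ?thesis by linarith
qed

end

lemma D1: "0 \<le> s \<Longrightarrow> s \<le> t \<Longrightarrow> clip (-t) t x = clip (-s) s x + clip s t x + clip (-t) (-s) x"
  unfolding clip_def by auto
lemma D2: "0 \<le> k \<Longrightarrow> k \<le> t \<Longrightarrow> clip (-t) t x = clip 0 k x + clip k t x + clip (-t) 0 x + (- k)"
  unfolding clip_def by auto
lemma D2': "0 \<le> t \<Longrightarrow> clip (-t) t x = clip 0 t x + clip 0 0 x + clip (-t) 0 x + 0"
  unfolding clip_def by auto
lemma D3: "0 \<le> k \<Longrightarrow> k \<le> t \<Longrightarrow> clip (-t) t x = clip (-k) 0 x + clip (-t) (-k) x + clip 0 t x + k"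
  unfolding clip_def by auto
lemma D3': "0 \<le> t \<Longrightarrow> clip (-t) t x = clip (-t) 0 x + clip 0 0 x + clip 0 t x + 0"
  unfolding clip_def by auto

context prob_space begin

lemma Gcov_cv: "Gcov M X1 X2 t = cv (\<lambda>\<omega>. clip (-t) t (X1 \<omega>)) (\<lambda>\<omega>. clip (-t) t (X2 \<omega>))"
  unfolding Gcov_def cv_def trunc_at_def clip_def ..

lemma sum3_int:
  fixes X1 X2 :: "'a \<Rightarrow> real"
  assumes [measurable]: "X1 \<in> borel_measurable M" "X2 \<in> borel_measurable M"
  shows "integrable M (\<lambda>\<omega>. clip a1 b1 (X1 \<omega>) + clip a2 b2 (X1 \<omega>) + clip a3 b3 (X1 \<omega>))"
    and "integrable M (\<lambda>\<omega>. (clip a1 b1 (X1 \<omega>) + clip a2 b2 (X1 \<omega>) + clip a3 b3 (X1 \<omega>)) *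
            (clip c1 d1 (X2 \<omega>) + clip c2 d2 (X2 \<omega>) + clip c3 d3 (X2 \<omega>)))"
proof -
  have b: "\<bar>clip a b x\<bar> \<le> \<bar>a\<bar> + \<bar>b\<bar>" for a b x unfolding clip_def by auto
  define K1 where "K1 = (\<bar>a1\<bar> + \<bar>b1\<bar>) + (\<bar>a2\<bar> + \<bar>b2\<bar>) + (\<bar>a3\<bar> + \<bar>b3\<bar>)"
  define K2 where "K2 = (\<bar>c1\<bar> + \<bar>d1\<bar>) + (\<bar>c2\<bar> + \<bar>d2\<bar>) + (\<bar>c3\<bar> + \<bar>d3\<bar>)"
  have bu: "\<bar>clip a1 b1 x + clip a2 b2 x + clip a3 b3 x\<bar> \<le> K1" for x
  proof -
    have "\<bar>clip a1 b1 x + clip a2 b2 x + clip a3 b3 x\<bar> \<le> \<bar>clip a1 b1 x\<bar> + \<bar>clip a2 b2 x\<bar> + \<bar>clip a3 b3 x\<bar>"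
      by (rule order.trans[OF abs_triangle_ineq add_right_mono[OF abs_triangle_ineq]])
    also have "\<dots> \<le> K1" unfolding K1_def by (intro add_mono b)
    finally show ?thesis .
  qed
  have bv: "\<bar>clip c1 d1 x + clip c2 d2 x + clip c3 d3 x\<bar> \<le> K2" for x
  proof -
    have "\<bar>clip c1 d1 x + clip c2 d2 x + clip c3 d3 x\<bar> \<le> \<bar>clip c1 d1 x\<bar> + \<bar>clip c2 d2 x\<bar> + \<bar>clip c3 d3 x\<bar>"
      by (rule order.trans[OF abs_triangle_ineq add_right_mono[OF abs_triangle_ineq]])
    also have "\<dots> \<le> K2" unfolding K2_def by (intro add_mono b)
    finally show ?thesis .
  qed
  have K: "0 \<le> K1" "0 \<le> K2" unfolding K1_def K2_def by simp_all
  show "integrable M (\<lambda>\<omega>. clip a1 b1 (X1 \<omega>) + clip a2 b2 (X1 \<omega>) + clip a3 b3 (X1 \<omega>))"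
    by (rule bnd_int[where K=K1]) (use bu in auto)
  show "integrable M (\<lambda>\<omega>. (clip a1 b1 (X1 \<omega>) + clip a2 b2 (X1 \<omega>) + clip a3 b3 (X1 \<omega>)) *
            (clip c1 d1 (X2 \<omega>) + clip c2 d2 (X2 \<omega>) + clip c3 d3 (X2 \<omega>)))"
  proof (rule bnd_int2[where K="K1 + K2"])
    fix \<omega>
    show "\<bar>clip a1 b1 (X1 \<omega>) + clip a2 b2 (X1 \<omega>) + clip a3 b3 (X1 \<omega>)\<bar> \<le> K1 + K2"
      using bu[of "X1 \<omega>"] K by linarith
    show "\<bar>clip c1 d1 (X2 \<omega>) + clip c2 d2 (X2 \<omega>) + clip c3 d3 (X2 \<omega>)\<bar> \<le> K1 + K2"
      using bv[of "X2 \<omega>"] K by linarith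
  qed measurable
qed

lemma cv_shift3:
  fixes X1 X2 :: "'a \<Rightarrow> real"
  assumes [measurable]: "X1 \<in> borel_measurable M" "X2 \<in> borel_measurable M"
  shows "cv (\<lambda>\<omega>. clip a1 b1 (X1 \<omega>) + clip a2 b2 (X1 \<omega>) + clip a3 b3 (X1 \<omega>) + c)
            (\<lambda>\<omega>. clip c1 d1 (X2 \<omega>) + clip c2 d2 (X2 \<omega>) + clip c3 d3 (X2 \<omega>) + d) =
         cv (\<lambda>\<omega>. clip a1 b1 (X1 \<omega>) + clip a2 b2 (X1 \<omega>) + clip a3 b3 (X1 \<omega>))
            (\<lambda>\<omega>. clip c1 d1 (X2 \<omega>) + clip c2 d2 (X2 \<omega>) + clip c3 d3 (X2 \<omega>))"
  by (rule cv_shift) (rule sum3_int[OF assms], rule sum3_int[OF assms(2,1)], rule sum3_int[OF assms])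

lemma G_mono0:
  fixes X1 X2 :: "'a \<Rightarrow> real"
  assumes [measurable]: "X1 \<in> borel_measurable M" "X2 \<in> borel_measurable M"
    and pq: "\<And>x y. prob {\<omega>\<in>space M. X1 \<omega> \<le> x \<and> X2 \<omega> \<le> y} - prob {\<omega>\<in>space M. X1 \<omega> \<le> x} * prob {\<omega>\<in>space M. X2 \<omega> \<le> y} \<ge> 0"
    and st: "0 \<le> s" "s \<le> t"
  shows "Gcov M X1 X2 s \<le> Gcov M X1 X2 t"
proof -
  have "Gcov M X1 X2 t = cv (\<lambda>\<omega>. clip (-s) s (X1 \<omega>) + clip s t (X1 \<omega>) + clip (-t) (-s) (X1 \<omega>))
     (\<lambda>\<omega>. clip (-s) s (X2 \<omega>) + clip s t (X2 \<omega>) + clip (-t) (-s) (X2 \<omega>))"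
    unfolding Gcov_cv by (subst (1 2) D1[OF st]) (rule refl)
  also have "\<dots> \<ge> cv (\<lambda>\<omega>. clip (-s) s (X1 \<omega>)) (\<lambda>\<omega>. clip (-s) s (X2 \<omega>))"
    by (rule cv_dom[OF assms(1,2) pq]) (use st in auto)
  finally show ?thesis unfolding Gcov_cv .
qed

lemma G_nonneg:
  fixes X1 X2 :: "'a \<Rightarrow> real"
  assumes [measurable]: "X1 \<in> borel_measurable M" "X2 \<in> borel_measurable M"
    and pq: "\<And>x y. prob {\<omega>\<in>space M. X1 \<omega> \<le> x \<and> X2 \<omega> \<le> y} - prob {\<omega>\<in>space M. X1 \<omega> \<le> x} * prob {\<omega>\<in>space M. X2 \<omega> \<le> y} \<ge> 0"
  shows "0 \<le> Gcov M X1 X2 t"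
proof (cases "0 \<le> t")
  case True
  then show ?thesis unfolding Gcov_cv cv_def using pqd_clip_cov[OF assms(1,2) pq, of "-t" t "-t" t] by simp
next
  case False
  then have "clip (-t) t x = -t" for x unfolding clip_def by auto
  then show ?thesis unfolding Gcov_cv cv_def by (simp add: prob_space)
qed

lemma G_mono:
  fixes X1 X2 :: "'a \<Rightarrow> real"
  assumes [measurable]: "X1 \<in> borel_measurable M" "X2 \<in> borel_measurable M"
    and pq: "\<And>x y. prob {\<omega>\<in>space M. X1 \<omega> \<le> x \<and> X2 \<omega> \<le> y} - prob {\<omega>\<in>space M. X1 \<omega> \<le> x} * prob {\<omega>\<in>space M. X2 \<omega> \<le> y} \<ge> 0"
  shows "mono (Gcov M X1 X2)"
proof (rule monoI)
  fix s t :: real assume st: "s \<le> t"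
  show "Gcov M X1 X2 s \<le> Gcov M X1 X2 t"
  proof (cases "0 \<le> s")
    case True then show ?thesis using G_mono0[OF assms True st] by simp
  next
    case False
    then have "clip (-s) s x = -s" for x unfolding clip_def by auto
    then have "Gcov M X1 X2 s = 0" unfolding Gcov_cv cv_def by (simp add: prob_space)
    then show ?thesis using G_nonneg[OF assms] by simp
  qed
qed

lemma G_pos:
  fixes X1 X2 :: "'a \<Rightarrow> real"
  assumes [measurable]: "X1 \<in> borel_measurable M" "X2 \<in> borel_measurable M"
    and pq: "\<And>x y. prob {\<omega>\<in>space M. X1 \<omega> \<le> x \<and> X2 \<omega> \<le> y} - prob {\<omega>\<in>space M. X1 \<omega> \<le> x} * prob {\<omega>\<in>space M. X2 \<omega> \<le> y} \<ge> 0"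
    and kt: "0 \<le> k" "k \<le> t"
  shows "cv (\<lambda>\<omega>. clip 0 k (X1 \<omega>)) (\<lambda>\<omega>. clip 0 t (X2 \<omega>)) \<le> Gcov M X1 X2 t"
proof -
  have "Gcov M X1 X2 t = cv (\<lambda>\<omega>. clip 0 k (X1 \<omega>) + clip k t (X1 \<omega>) + clip (-t) 0 (X1 \<omega>) + (-k))
     (\<lambda>\<omega>. clip 0 t (X2 \<omega>) + clip 0 0 (X2 \<omega>) + clip (-t) 0 (X2 \<omega>) + 0)"
    unfolding Gcov_cv by (subst (1) D2[OF kt], subst (1) D2'[of t]) (use kt in auto)
  also have "\<dots> = cv (\<lambda>\<omega>. clip 0 k (X1 \<omega>) + clip k t (X1 \<omega>) + clip (-t) 0 (X1 \<omega>))
     (\<lambda>\<omega>. clip 0 t (X2 \<omega>) + clip 0 0 (X2 \<omega>) + clip (-t) 0 (X2 \<omega>))"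
    by (rule cv_shift3[OF assms(1,2)])
  also have "\<dots> \<ge> cv (\<lambda>\<omega>. clip 0 k (X1 \<omega>)) (\<lambda>\<omega>. clip 0 t (X2 \<omega>))"
    by (rule cv_dom[OF assms(1,2) pq]) (use kt in auto)
  finally show ?thesis .
qed

lemma G_neg:
  fixes X1 X2 :: "'a \<Rightarrow> real"
  assumes [measurable]: "X1 \<in> borel_measurable M" "X2 \<in> borel_measurable M"
    and pq: "\<And>x y. prob {\<omega>\<in>space M. X1 \<omega> \<le> x \<and> X2 \<omega> \<le> y} - prob {\<omega>\<in>space M. X1 \<omega> \<le> x} * prob {\<omega>\<in>space M. X2 \<omega> \<le> y} \<ge> 0"
    and kt: "0 \<le> k" "k \<le> t"
  shows "cv (\<lambda>\<omega>. clip (-k) 0 (X1 \<omega>)) (\<lambda>\<omega>. clip (-t) 0 (X2 \<omega>)) \<le> Gcov M X1 X2 t"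
proof -
  have "Gcov M X1 X2 t = cv (\<lambda>\<omega>. clip (-k) 0 (X1 \<omega>) + clip (-t) (-k) (X1 \<omega>) + clip 0 t (X1 \<omega>) + k)
     (\<lambda>\<omega>. clip (-t) 0 (X2 \<omega>) + clip 0 0 (X2 \<omega>) + clip 0 t (X2 \<omega>) + 0)"
    unfolding Gcov_cv by (subst (1) D3[OF kt], subst (1) D3'[of t]) (use kt in auto)
  also have "\<dots> = cv (\<lambda>\<omega>. clip (-k) 0 (X1 \<omega>) + clip (-t) (-k) (X1 \<omega>) + clip 0 t (X1 \<omega>))
     (\<lambda>\<omega>. clip (-t) 0 (X2 \<omega>) + clip 0 0 (X2 \<omega>) + clip 0 t (X2 \<omega>))"
    by (rule cv_shift3[OF assms(1,2)])
  also have "\<dots> \<ge> cv (\<lambda>\<omega>. clip (-k) 0 (X1 \<omega>)) (\<lambda>\<omega>. clip (-t) 0 (X2 \<omega>))"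
    by (rule cv_dom[OF assms(1,2) pq]) (use kt in auto)
  finally show ?thesis .
qed

lemma G_upper:
  fixes X1 X2 :: "'a \<Rightarrow> real"
  assumes [measurable]: "X1 \<in> borel_measurable M" "X2 \<in> borel_measurable M"
    and i2: "integrable M X2" and t: "0 \<le> t"
  shows "\<bar>Gcov M X1 X2 t\<bar> \<le> 2 * t * expectation (\<lambda>\<omega>. \<bar>X2 \<omega>\<bar>)"
proof -
  let ?U = "\<lambda>\<omega>. clip (-t) t (X1 \<omega>)" and ?V = "\<lambda>\<omega>. clip (-t) t (X2 \<omega>)"
  have bU: "\<bar>?U \<omega>\<bar> \<le> t" for \<omega> using t unfolding clip_def by auto
  have bV: "\<bar>?V \<omega>\<bar> \<le> \<bar>X2 \<omega>\<bar>" for \<omega> using t unfolding clip_def by auto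
  have iU: "integrable M ?U" by (rule bnd_int[where K=t]) (use bU in auto)
  have iV: "integrable M ?V" by (rule bnd_int[where K=t]) (use t in \<open>auto simp: clip_def\<close>)
  have iUV: "integrable M (\<lambda>\<omega>. ?U \<omega> * ?V \<omega>)" by (rule bnd_int2[where K=t]) (use t in \<open>auto simp: clip_def\<close>)
  have eq: "Gcov M X1 X2 t = expectation (\<lambda>\<omega>. ?U \<omega> * (?V \<omega> - expectation ?V))"
    unfolding Gcov_cv cv_def using iU iUV by (simp add: right_diff_distrib)
  have "\<bar>expectation (\<lambda>\<omega>. ?U \<omega> * (?V \<omega> - expectation ?V))\<bar> \<le> expectation (\<lambda>\<omega>. \<bar>?U \<omega> * (?V \<omega> - expectation ?V)\<bar>)"
    by (rule integral_abs_bound)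
  also have "\<dots> \<le> expectation (\<lambda>\<omega>. t * (\<bar>X2 \<omega>\<bar> + expectation (\<lambda>\<omega>. \<bar>X2 \<omega>\<bar>)))"
  proof (rule integral_mono)
    show "integrable M (\<lambda>\<omega>. \<bar>?U \<omega> * (?V \<omega> - expectation ?V)\<bar>)"
      using iUV iU by (simp add: right_diff_distrib)
    show "integrable M (\<lambda>\<omega>. t * (\<bar>X2 \<omega>\<bar> + expectation (\<lambda>\<omega>. \<bar>X2 \<omega>\<bar>)))" using i2 by simp
    fix \<omega>
    have "\<bar>expectation ?V\<bar> \<le> expectation (\<lambda>\<omega>. \<bar>X2 \<omega>\<bar>)"
    proof -
      have "\<bar>expectation ?V\<bar> \<le> expectation (\<lambda>\<omega>. \<bar>?V \<omega>\<bar>)" by (rule integral_abs_bound)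
      also have "\<dots> \<le> expectation (\<lambda>\<omega>. \<bar>X2 \<omega>\<bar>)" by (rule integral_mono) (use iV i2 bV in auto)
      finally show ?thesis .
    qed
    then have "\<bar>?V \<omega> - expectation ?V\<bar> \<le> \<bar>X2 \<omega>\<bar> + expectation (\<lambda>\<omega>. \<bar>X2 \<omega>\<bar>)" using bV[of \<omega>] by linarith
    then show "\<bar>?U \<omega> * (?V \<omega> - expectation ?V)\<bar> \<le> t * (\<bar>X2 \<omega>\<bar> + expectation (\<lambda>\<omega>. \<bar>X2 \<omega>\<bar>))"
      unfolding abs_mult using bU[of \<omega>] by (intro mult_mono) auto
  qed
  also have "\<dots> = 2 * t * expectation (\<lambda>\<omega>. \<bar>X2 \<omega>\<bar>)" using i2 by (simp add: prob_space algebra_simps)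
  finally show ?thesis unfolding eq .
qed

end

lemma inv_sq_int:
  fixes a :: real assumes a: "0 < a"
  shows "set_integrable lborel {a..} (\<lambda>x. 1 / x\<^sup>2)"
proof -
  have "((\<lambda>x. 1 / x ^ 2) has_integral 1 / (real (2 - 1) * a ^ (2 - 1))) {a..}"
    by (rule has_integral_inverse_power_to_inf) (use a in auto)
  then have "(\<lambda>x. 1 / x\<^sup>2) integrable_on {a..}" by (auto simp: integrable_on_def)
  then have "(\<lambda>x. 1 / x\<^sup>2) absolutely_integrable_on {a..}"
    by (rule nonnegative_absolutely_integrable_1) simp
  then have "integrable lebesgue (\<lambda>x. indicator {a..} x *\<^sub>R (1 / x\<^sup>2))"
    unfolding set_integrable_def .
  then show ?thesis unfolding set_integrable_def
    by (subst (asm) integrable_completion) measurable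
qed

context prob_space begin

lemma G_integral:
  fixes X1 X2 :: "'a \<Rightarrow> real"
  assumes [measurable]: "X1 \<in> borel_measurable M" "X2 \<in> borel_measurable M"
    and pq: "\<And>x y. prob {\<omega>\<in>space M. X1 \<omega> \<le> x \<and> X2 \<omega> \<le> y} - prob {\<omega>\<in>space M. X1 \<omega> \<le> x} * prob {\<omega>\<in>space M. X2 \<omega> \<le> y} \<ge> 0"
    and i2: "integrable M X2" and r: "0 < r"
  shows "set_integrable lborel {r..} (\<lambda>t. Gcov M X1 X2 t / t ^ 3)"
    and "Gcov M X1 X2 r / r\<^sup>2 \<le> 8 * (LBINT t:{r..}. Gcov M X1 X2 t / t ^ 3)"
    and "0 \<le> (LBINT t:{r..}. Gcov M X1 X2 t / t ^ 3)"
proof -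
  let ?G = "Gcov M X1 X2"
  let ?c = "2 * expectation (\<lambda>\<omega>. \<bar>X2 \<omega>\<bar>)"
  have Gm[measurable]: "?G \<in> borel_measurable borel"
    by (rule borel_measurable_mono[OF G_mono[OF assms(1,2) pq]])
  have Gn: "0 \<le> ?G t" for t by (rule G_nonneg[OF assms(1,2) pq])
  have int2: "integrable lborel (\<lambda>t. indicator {r..} t * (?c * (1 / t\<^sup>2)))"
  proof -
    have i0: "integrable lborel (\<lambda>x. indicator {r..} x *\<^sub>R (1 / x\<^sup>2))"
      using inv_sq_int[OF r] unfolding set_integrable_def .
    have "integrable lborel (\<lambda>t. ?c * (indicator {r..} t *\<^sub>R (1 / t\<^sup>2)))"
      using i0 by (rule integrable_mult_right)
    moreover have "(\<lambda>t. ?c * (indicator {r..} t *\<^sub>R (1 / t\<^sup>2))) = (\<lambda>t. indicator {r..} t * (?c * (1 / t\<^sup>2)))"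
      by (auto simp: fun_eq_iff)
    ultimately show ?thesis by simp
  qed
  show si: "set_integrable lborel {r..} (\<lambda>t. ?G t / t ^ 3)"
    unfolding set_integrable_def
  proof (rule Bochner_Integration.integrable_bound[OF int2])
    show "AE t in lborel. norm (indicator {r..} t *\<^sub>R (?G t / t ^ 3)) \<le> norm (indicator {r..} t * (?c * (1 / t\<^sup>2)))"
    proof (rule AE_I2)
      fix t :: real
      show "norm (indicator {r..} t *\<^sub>R (?G t / t ^ 3)) \<le> norm (indicator {r..} t * (?c * (1 / t\<^sup>2)))"
      proof (cases "r \<le> t")
        case True
        then have tp: "0 < t" using r by simp
        have "\<bar>?G t\<bar> \<le> 2 * t * expectation (\<lambda>\<omega>. \<bar>X2 \<omega>\<bar>)" by (rule G_upper[OF assms(1,2) i2]) (use tp in simp)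
        then have "\<bar>?G t\<bar> / t ^ 3 \<le> 2 * t * expectation (\<lambda>\<omega>. \<bar>X2 \<omega>\<bar>) / t ^ 3"
          using tp by (simp add: divide_right_mono)
        also have "\<dots> = ?c * (1 / t\<^sup>2)" using tp by (simp add: field_simps power2_eq_square power3_eq_cube)
        finally have "\<bar>?G t / t ^ 3\<bar> \<le> ?c * (1 / t\<^sup>2)" using tp by (simp add: abs_divide)
        moreover have "0 \<le> ?c * (1 / t\<^sup>2)" by (simp add: integral_nonneg_AE)
        ultimately show ?thesis using True by (simp add: indicator_def)
      qed (simp add: indicator_def)
    qed
  qed measurable
  show nn: "0 \<le> (LBINT t:{r..}. ?G t / t ^ 3)"
    unfolding set_lebesgue_integral_def
    by (rule integral_nonneg_AE) (use r Gn in \<open>auto simp: indicator_def intro!: AE_I2 divide_nonneg_pos\<close>)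
  have fin: "emeasure lborel {r..2*r} < \<top>" using r by simp
  have I1: "(\<integral>t. indicator {r..2*r} t * (?G r / (8 * r ^ 3)) \<partial>lborel) = (\<integral>t. indicator {r..2*r} t \<partial>lborel) * (?G r / (8 * r ^ 3))"
    by (rule integral_mult_left_zero)
  have I2: "(\<integral>t. indicator {r..2*r} t \<partial>lborel) = r"
    using r by (simp add: measure_lborel_Icc)
  have "?G r / r\<^sup>2 = (\<integral>t. indicator {r..2*r} t * (?G r / (8 * r ^ 3)) \<partial>lborel) * 8"
    unfolding I1 I2 using r by (simp add: power2_eq_square power3_eq_cube field_simps)
  also have "(\<integral>t. indicator {r..2*r} t * (?G r / (8 * r ^ 3)) \<partial>lborel) \<le> (LBINT t:{r..}. ?G t / t ^ 3)"
    unfolding set_lebesgue_integral_def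
  proof (rule integral_mono)
    show "integrable lborel (\<lambda>t. indicator {r..2*r} t * (?G r / (8 * r ^ 3)))"
      using fin by (intro integrable_mult_left integrable_real_indicator) auto
    show "integrable lborel (\<lambda>t. indicator {r..} t *\<^sub>R (?G t / t ^ 3))"
      using si unfolding set_integrable_def .
    fix t :: real
    show "indicator {r..2*r} t * (?G r / (8 * r ^ 3)) \<le> indicator {r..} t *\<^sub>R (?G t / t ^ 3)"
    proof (cases "r \<le> t")
      case True
      then have tp: "0 < t" using r by simp
      show ?thesis
      proof (cases "t \<le> 2 * r")
        case t2: True
        have "?G r \<le> ?G t" using G_mono[OF assms(1,2) pq] True by (simp add: mono_def)
        moreover have "t ^ 3 \<le> (2 * r) ^ 3" using t2 tp by (intro power_mono) auto
        ultimately have "?G r / (8 * r ^ 3) \<le> ?G t / t ^ 3"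
          using Gn[of r] tp r by (simp add: frac_le)
        then show ?thesis using True t2 by (simp add: indicator_def)
      next
        case False
        then show ?thesis using True Gn[of t] tp by (simp add: indicator_def)
      qed
    next
      case False
      then show ?thesis using r by (simp add: indicator_def)
    qed
  qed
  finally show "?G r / r\<^sup>2 \<le> 8 * (LBINT t:{r..}. ?G t / t ^ 3)" by simp
qed

end

context prob_space begin

lemma pq_of:
  assumes "pairwise_PQD M X" "1 \<le> k" "1 \<le> j" "k \<noteq> j"
  shows "\<And>x y. prob {\<omega>\<in>space M. X k \<omega> \<le> x \<and> X j \<omega> \<le> y} - prob {\<omega>\<in>space M. X k \<omega> \<le> x} * prob {\<omega>\<in>space M. X j \<omega> \<le> y} \<ge> 0"
  using assms unfolding pairwise_PQD_def by blast

lemma Hsum_gen: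
  fixes X :: "nat \<Rightarrow> 'a \<Rightarrow> real" and a b :: "nat \<Rightarrow> real"
  assumes Xm: "\<And>n. 1 \<le> n \<Longrightarrow> X n \<in> borel_measurable M" and pqd: "pairwise_PQD M X"
    and Xi: "\<And>n. 1 \<le> n \<Longrightarrow> integrable M (X n)"
    and summ: "(\<lambda>(k, j). \<bar>a k * a j\<bar> * (LBINT t:{real j..}. Gcov M (X k) (X j) t / t ^ 3))
           summable_on {(k, j). 1 \<le> k \<and> k < j}"
    and b0: "\<And>k. 0 \<le> b k" and ba: "\<And>k. b k \<le> \<bar>a k\<bar>"
  shows "(\<Sum>j=1..n. \<Sum>k=1..<j. b k * b j * (if 1 \<le> k \<and> k < j then Gcov M (X k) (X j) (real j) else 0) / (real j)\<^sup>2)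
     \<le> 8 * infsum (\<lambda>(k, j). \<bar>a k * a j\<bar> * (LBINT t:{real j..}. Gcov M (X k) (X j) t / t ^ 3)) {(k, j). 1 \<le> k \<and> k < j}"
proof -
  define f where "f = (\<lambda>(k, j). \<bar>a k * a j\<bar> * (LBINT t:{real j..}. Gcov M (X k) (X j) t / t ^ 3))"
  define S where "S = {(k::nat, j::nat). 1 \<le> k \<and> k < j}"
  have fnn0: "0 \<le> f (k, j)" if p: "1 \<le> k" "k < j" for k j
  proof -
    have "0 \<le> (LBINT t:{real j..}. Gcov M (X k) (X j) t / t ^ 3)"
      by (rule G_integral(3)[OF Xm Xm pq_of[OF pqd] Xi]) (use p in auto)
    then show ?thesis unfolding f_def by simp
  qed
  have fnn: "0 \<le> f p" if "p \<in> S" for p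
    using that fnn0 unfolding S_def by (cases p) auto
  have tm: "b k * b j * (if 1 \<le> k \<and> k < j then Gcov M (X k) (X j) (real j) else 0) / (real j)\<^sup>2 \<le> 8 * f (k, j)"
    if kj: "1 \<le> k" "k < j" for k j
  proof -
    have G0: "0 \<le> Gcov M (X k) (X j) (real j)" by (rule G_nonneg[OF Xm Xm pq_of[OF pqd]]) (use kj in auto)
    have G1: "Gcov M (X k) (X j) (real j) / (real j)\<^sup>2 \<le> 8 * (LBINT t:{real j..}. Gcov M (X k) (X j) t / t ^ 3)"
      by (rule G_integral(2)[OF Xm Xm pq_of[OF pqd] Xi]) (use kj in auto)
    have bb: "b k * b j \<le> \<bar>a k * a j\<bar>"
      unfolding abs_mult by (rule mult_mono) (use b0 ba in auto)
    have "b k * b j * Gcov M (X k) (X j) (real j) / (real j)\<^sup>2 = (b k * b j) * (Gcov M (X k) (X j) (real j) / (real j)\<^sup>2)"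
      by simp
    also have "\<dots> \<le> \<bar>a k * a j\<bar> * (8 * (LBINT t:{real j..}. Gcov M (X k) (X j) t / t ^ 3))"
      by (rule mult_mono[OF bb G1]) (use G0 in auto)
    finally show ?thesis using kj unfolding f_def by simp
  qed
  define P where "P = prod.swap ` (SIGMA j:{1..n}. {1..<j})"
  have "(\<Sum>j=1..n. \<Sum>k=1..<j. b k * b j * (if 1 \<le> k \<and> k < j then Gcov M (X k) (X j) (real j) else 0) / (real j)\<^sup>2)
      \<le> (\<Sum>j=1..n. \<Sum>k=1..<j. 8 * f (k, j))"
    by (intro sum_mono tm) auto
  also have "\<dots> = (\<Sum>(j, k)\<in>(SIGMA j:{1..n}. {1..<j}). 8 * f (k, j))"
    by (rule sum.Sigma) auto
  also have "\<dots> = (\<Sum>p\<in>P. 8 * f p)"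
    unfolding P_def by (subst sum.reindex) (auto simp: case_prod_beta prod.swap_def)
  also have "\<dots> = 8 * sum f P" by (simp add: sum_distrib_left)
  also have "sum f P \<le> infsum f S"
  proof (rule finite_sum_le_infsum)
    show "f summable_on S" using summ unfolding f_def S_def .
    show "finite P" unfolding P_def by auto
    show "P \<subseteq> S" unfolding P_def S_def by auto
    show "\<And>x. x \<in> S - P \<Longrightarrow> 0 \<le> f x" using fnn by auto
  qed
  finally show ?thesis unfolding f_def S_def by simp
qed

end

context prob_space begin

lemma combo:
  fixes X :: "nat \<Rightarrow> 'a \<Rightarrow> real" and a b :: "nat \<Rightarrow> real" and Y :: "'a \<Rightarrow> real" and \<sigma> C B0 :: real
  assumes Xm: "\<And>n. 1 \<le> n \<Longrightarrow> X n \<in> borel_measurable M" and pqd: "pairwise_PQD M X"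
    and Ym: "Y \<in> borel_measurable M" and iY: "integrable M Y" and C0: "0 \<le> C"
    and dom: "\<And>n t. 1 \<le> n \<Longrightarrow> 0 < t \<Longrightarrow> prob {\<omega>\<in>space M. t < \<bar>X n \<omega>\<bar>} \<le> C * prob {\<omega>\<in>space M. t < \<bar>Y \<omega>\<bar>}"
    and Bb: "\<And>n. (\<Sum>k=1..n. (a k)\<^sup>2) \<le> B0 * real n"
    and summ: "(\<lambda>(k, j). \<bar>a k * a j\<bar> * (LBINT t:{real j..}. Gcov M (X k) (X j) t / t ^ 3))
           summable_on {(k, j). 1 \<le> k \<and> k < j}"
    and b0: "\<And>k. 0 \<le> b k" and ba: "\<And>k. b k \<le> \<bar>a k\<bar>" and \<sigma>: "\<sigma> = 1 \<or> \<sigma> = -1"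
  shows "AE \<omega> in M. (\<lambda>n. (\<Sum>k=1..n. b k * (max (\<sigma> * X k \<omega>) 0 - expectation (\<lambda>\<omega>. max (\<sigma> * X k \<omega>) 0))) / real n) \<longlonglongrightarrow> 0"
proof -
  define Z where "Z k \<omega> = max (\<sigma> * X k \<omega>) 0" for k \<omega>
  define H where "H k j = (if 1 \<le> k \<and> k < j then Gcov M (X k) (X j) (real j) else 0)" for k j
  define K0 where "K0 = 8 * infsum (\<lambda>(k, j). \<bar>a k * a j\<bar> * (LBINT t:{real j..}. Gcov M (X k) (X j) t / t ^ 3)) {(k, j). 1 \<le> k \<and> k < j}"
  have Xi: "integrable M (X n)" if n: "1 \<le> n" for n
  proof -
    have [measurable]: "X n \<in> borel_measurable M" using Xm n by simp
    have "integrable M (\<lambda>\<omega>. \<bar>X n \<omega>\<bar>)"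
      by (rule dom_int(1)[OF _ _ _ _ C0 dom[OF n]]) (use Ym iY in auto)
    then show ?thesis using integrable_abs_iff[of "X n" M] by simp
  qed
  have absY: "\<bar>Y \<omega>\<bar> = \<bar>Y \<omega>\<bar>" for \<omega> ..
  interpret N: nnsetup M Z b Y C B0 K0 H
  proof
    show "Z k \<in> borel_measurable M" if "1 \<le> k" for k unfolding Z_def using Xm[OF that] by measurable
    show "0 \<le> Z k \<omega>" for k \<omega> unfolding Z_def by simp
    show "Y \<in> borel_measurable M" by (rule Ym)
    show "integrable M Y" by (rule iY)
    show "0 \<le> C" by (rule C0)
    show "prob {\<omega>\<in>space M. s < Z k \<omega>} \<le> C * prob {\<omega>\<in>space M. s < \<bar>Y \<omega>\<bar>}" if k: "1 \<le> k" and s: "0 < s" for k s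
    proof -
      have [measurable]: "X k \<in> borel_measurable M" using Xm k by simp
      have "prob {\<omega>\<in>space M. s < Z k \<omega>} \<le> prob {\<omega>\<in>space M. s < \<bar>X k \<omega>\<bar>}"
      proof (rule finite_measure_mono)
        show "{\<omega>\<in>space M. s < Z k \<omega>} \<subseteq> {\<omega>\<in>space M. s < \<bar>X k \<omega>\<bar>}"
          using s \<sigma> unfolding Z_def by auto
      qed measurable
      also have "\<dots> \<le> C * prob {\<omega>\<in>space M. s < \<bar>Y \<omega>\<bar>}" by (rule dom[OF k s])
      finally show ?thesis .
    qed
    show "0 \<le> b k" for k by (rule b0)
    show "(\<Sum>k=1..n. (b k)\<^sup>2) \<le> B0 * real n" for n
    proof -
      have "(\<Sum>k=1..n. (b k)\<^sup>2) \<le> (\<Sum>k=1..n. (a k)\<^sup>2)"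
      proof (rule sum_mono)
        fix k
        have "(b k)\<^sup>2 \<le> \<bar>a k\<bar>\<^sup>2" by (rule power_mono) (use b0 ba in auto)
        then show "(b k)\<^sup>2 \<le> (a k)\<^sup>2" by simp
      qed
      also have "\<dots> \<le> B0 * real n" by (rule Bb)
      finally show ?thesis .
    qed
    show "expectation (\<lambda>\<omega>. min (Z k \<omega>) (real k) * min (Z j \<omega>) (real j))
       - expectation (\<lambda>\<omega>. min (Z k \<omega>) (real k)) * expectation (\<lambda>\<omega>. min (Z j \<omega>) (real j)) \<le> H k j"
      if kj: "1 \<le> k" "k < j" for k j
    proof -
      have [measurable]: "X k \<in> borel_measurable M" "X j \<in> borel_measurable M" using Xm kj by auto
      have pq: "\<And>x y. prob {\<omega>\<in>space M. X k \<omega> \<le> x \<and> X j \<omega> \<le> y} - prob {\<omega>\<in>space M. X k \<omega> \<le> x} * prob {\<omega>\<in>space M. X j \<omega> \<le> y} \<ge> 0"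
        by (rule pq_of[OF pqd]) (use kj in auto)
      have Hkj: "H k j = Gcov M (X k) (X j) (real j)" unfolding H_def using kj by simp
      show ?thesis
      proof (cases "\<sigma> = 1")
        case True
        have e: "min (Z i \<omega>) (real i) = clip 0 (real i) (X i \<omega>)" for i \<omega>
          unfolding Z_def clip_def True by auto
        show ?thesis unfolding e Hkj using G_pos[OF _ _ pq, of "real k" "real j"] kj unfolding cv_def by simp
      next
        case False
        then have s: "\<sigma> = -1" using \<sigma> by simp
        have e: "min (Z i \<omega>) (real i) = - clip (- real i) 0 (X i \<omega>)" for i \<omega>
          unfolding Z_def clip_def s by auto
        show ?thesis unfolding e Hkj using G_neg[OF _ _ pq, of "real k" "real j"] kj unfolding cv_def by simp
      qed
    qed
    show "0 \<le> H k j" for k j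
      unfolding H_def using G_nonneg[OF Xm Xm pq_of[OF pqd]] by auto
    show "(\<Sum>j=1..n. \<Sum>k=1..<j. b k * b j * H k j / (real j)\<^sup>2) \<le> K0" for n
      unfolding H_def K0_def by (rule Hsum_gen[OF Xm pqd Xi summ b0 ba])
  qed
  show ?thesis using N.slln_nn unfolding N.\<mu>_def Z_def .
qed

end

theorem theorem1:
  fixes M :: "'a measure" and X :: "nat \<Rightarrow> 'a \<Rightarrow> real" and Y :: "'a \<Rightarrow> real"
    and a :: "nat \<Rightarrow> real"
  assumes "prob_space M"
    and "\<And>n. 1 \<le> n \<Longrightarrow> X n \<in> borel_measurable M"
    and "pairwise_PQD M X"
    and "Y \<in> borel_measurable M"
    and "stoch_dominated M X Y"
    and "integrable M Y"
    and "bdd_above {(\<Sum>k=1..n. (a k)\<^sup>2) / real n | n. 1 \<le> n}"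
    and "(\<lambda>(k, j). \<bar>a k * a j\<bar> * (LBINT t:{real j..}. Gcov M (X k) (X j) t / t ^ 3))
           summable_on {(k, j). 1 \<le> k \<and> k < j}"
  shows "AE \<omega> in M. (\<lambda>n. (\<Sum>k=1..n. a k * (X k \<omega> - (\<integral>\<omega>'. X k \<omega>' \<partial>M))) / real n)
                        \<longlonglongrightarrow> 0"
proof -
  interpret prob_space M by (rule assms(1))
  note Xm = assms(2) and pqd = assms(3) and Ym = assms(4) and iY = assms(6) and summ = assms(8)
  obtain C where C: "C > 0" and domC: "\<And>n t. 1 \<le> n \<Longrightarrow> 0 < t \<Longrightarrow>
      prob {\<omega>\<in>space M. t < \<bar>X n \<omega>\<bar>} \<le> C * prob {\<omega>\<in>space M. t < \<bar>Y \<omega>\<bar>}"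
    using assms(5) unfolding stoch_dominated_def by auto
  obtain B0 where B0: "\<And>x. x \<in> {(\<Sum>k=1..n. (a k)\<^sup>2) / real n | n. 1 \<le> n} \<Longrightarrow> x \<le> B0"
    using assms(7) unfolding bdd_above_def by auto
  have Bb: "(\<Sum>k=1..n. (a k)\<^sup>2) \<le> B0 * real n" for n
  proof (cases "n = 0")
    case True then show ?thesis by simp
  next
    case False
    then have "(\<Sum>k=1..n. (a k)\<^sup>2) / real n \<le> B0" by (intro B0) auto
    then show ?thesis using False by (simp add: divide_le_eq mult.commute)
  qed
  have C0: "0 \<le> C" using C by simp
  define ap where "ap k = max (a k) 0" for k
  define an where "an k = max (- a k) 0" for k
  have ap: "0 \<le> ap k" "ap k \<le> \<bar>a k\<bar>" for k unfolding ap_def by auto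
  have an: "0 \<le> an k" "an k \<le> \<bar>a k\<bar>" for k unfolding an_def by auto
  define P where "P k \<omega> = max (1 * X k \<omega>) 0" for k \<omega>
  define N where "N k \<omega> = max (- 1 * X k \<omega>) 0" for k \<omega>
  have c1: "AE \<omega> in M. (\<lambda>n. (\<Sum>k=1..n. ap k * (P k \<omega> - expectation (P k))) / real n) \<longlonglongrightarrow> 0"
    unfolding P_def by (rule combo[OF Xm pqd Ym iY C0 domC Bb summ ap]) auto
  have c2: "AE \<omega> in M. (\<lambda>n. (\<Sum>k=1..n. ap k * (N k \<omega> - expectation (N k))) / real n) \<longlonglongrightarrow> 0"
    unfolding N_def by (rule combo[OF Xm pqd Ym iY C0 domC Bb summ ap]) auto
  have c3: "AE \<omega> in M. (\<lambda>n. (\<Sum>k=1..n. an k * (P k \<omega> - expectation (P k))) / real n) \<longlonglongrightarrow> 0"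
    unfolding P_def by (rule combo[OF Xm pqd Ym iY C0 domC Bb summ an]) auto
  have c4: "AE \<omega> in M. (\<lambda>n. (\<Sum>k=1..n. an k * (N k \<omega> - expectation (N k))) / real n) \<longlonglongrightarrow> 0"
    unfolding N_def by (rule combo[OF Xm pqd Ym iY C0 domC Bb summ an]) auto
  have EX: "expectation (X k) = expectation (P k) - expectation (N k)" if k: "1 \<le> k" for k
  proof -
    have [measurable]: "X k \<in> borel_measurable M" using Xm k by simp
    have "integrable M (\<lambda>\<omega>. \<bar>X k \<omega>\<bar>)"
      by (rule dom_int(1)[OF _ _ _ _ C0 domC[OF k]]) (use Ym iY in auto)
    then have iX: "integrable M (X k)" using integrable_abs_iff[of "X k" M] by simp
    have iP: "integrable M (P k)" unfolding P_def
      by (rule Bochner_Integration.integrable_bound[OF \<open>integrable M (\<lambda>\<omega>. \<bar>X k \<omega>\<bar>)\<close>]) auto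
    have iN: "integrable M (N k)" unfolding N_def
      by (rule Bochner_Integration.integrable_bound[OF \<open>integrable M (\<lambda>\<omega>. \<bar>X k \<omega>\<bar>)\<close>]) auto
    have "X k = (\<lambda>\<omega>. P k \<omega> - N k \<omega>)" unfolding P_def N_def by (auto simp: fun_eq_iff)
    then have "expectation (X k) = expectation (\<lambda>\<omega>. P k \<omega> - N k \<omega>)" by simp
    also have "\<dots> = expectation (P k) - expectation (N k)" using iP iN by simp
    finally show ?thesis .
  qed
  from c1 c2 c3 c4 show ?thesis
  proof eventually_elim
    case (elim \<omega>)
    have eq: "(\<Sum>k=1..n. a k * (X k \<omega> - (\<integral>\<omega>'. X k \<omega>' \<partial>M))) / real n =
      (\<Sum>k=1..n. ap k * (P k \<omega> - expectation (P k))) / real n - (\<Sum>k=1..n. ap k * (N k \<omega> - expectation (N k))) / real n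
      - (\<Sum>k=1..n. an k * (P k \<omega> - expectation (P k))) / real n + (\<Sum>k=1..n. an k * (N k \<omega> - expectation (N k))) / real n" for n
    proof -
      have "(\<Sum>k=1..n. a k * (X k \<omega> - (\<integral>\<omega>'. X k \<omega>' \<partial>M))) =
        (\<Sum>k=1..n. ap k * (P k \<omega> - expectation (P k)) - ap k * (N k \<omega> - expectation (N k))
           - an k * (P k \<omega> - expectation (P k)) + an k * (N k \<omega> - expectation (N k)))"
      proof (rule sum.cong[OF refl])
        fix k assume "k \<in> {1..n}"
        then have e1: "(\<integral>\<omega>'. X k \<omega>' \<partial>M) = expectation (P k) - expectation (N k)" using EX by simp
        have e2: "a k = ap k - an k" unfolding ap_def an_def by auto
        have e3: "X k \<omega> = P k \<omega> - N k \<omega>" unfolding P_def N_def by auto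
        show "a k * (X k \<omega> - (\<integral>\<omega>'. X k \<omega>' \<partial>M)) = ap k * (P k \<omega> - expectation (P k)) - ap k * (N k \<omega> - expectation (N k))
           - an k * (P k \<omega> - expectation (P k)) + an k * (N k \<omega> - expectation (N k))"
          unfolding e1 e2 e3 by (simp add: algebra_simps)
      qed
      also have "\<dots> = (\<Sum>k=1..n. ap k * (P k \<omega> - expectation (P k))) - (\<Sum>k=1..n. ap k * (N k \<omega> - expectation (N k)))
          - (\<Sum>k=1..n. an k * (P k \<omega> - expectation (P k))) + (\<Sum>k=1..n. an k * (N k \<omega> - expectation (N k)))"
        by (simp add: sum.distrib sum_subtractf)
      finally show ?thesis by (simp add: add_divide_distrib diff_divide_distrib)
    qed
    have "(\<lambda>n. (\<Sum>k=1..n. ap k * (P k \<omega> - expectation (P k))) / real n - (\<Sum>k=1..n. ap k * (N k \<omega> - expectation (N k))) / real n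
      - (\<Sum>k=1..n. an k * (P k \<omega> - expectation (P k))) / real n + (\<Sum>k=1..n. an k * (N k \<omega> - expectation (N k))) / real n)
      \<longlonglongrightarrow> 0 - 0 - 0 + 0"
      by (intro tendsto_intros elim)
    then show ?case unfolding eq by simp
  qed
qed

end
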